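(* Suppose $L\ge 1$ and the eigenvalues $\lambda_1(\operatorname{cov}(\boldsymbol{f})),\dots,\lambda_L(\operatorname{cov}(\boldsymbol{f}))$ are distinct. Then the D-GCCA common-source vectors $\boldsymbol{c}_1,\dots,\boldsymbol{c}_K$ (defined in the context) do not depend on the (non-unique) choice of the orthonormal bases $\boldsymbol{f}_1,\dots,\boldsymbol{f}_K$ nor on the choice of the eigenvectors $\{\boldsymbol{\eta}^{(\ell)}\}_{1\le\ell\le L}$. (Note that the eigenvalues of $\operatorname{cov}(\boldsymbol f)$ themselves do not depend on the choice of the bases.)
   Context: $\mathcal{L}_0^2$ is the space of real-valued random variables with zero mean and finite variance with the covariance as inner product; $\perp$ means zero covariance, $\|x\|=\sqrt{\operatorname{var}(x)}$, $\theta(x,y)$ is the angle with $\cos\theta(x,y)=\operatorname{corr}(x,y)$, $\operatorname{corr}(x,0)=0$. $K\ge2$; $\boldsymbol{x}_k\in\mathbb{R}^{p_k}$ ($k\le K$) are random vectors with entries in $\mathcal{L}_0^2$, $r_k=\dim\operatorname{span}(\boldsymbol{x}_k^\top)\ge1$ (span of the entries), $r_f=\dim\sum_k\operatorname{span}(\boldsymbol{x}_k^\top)$. D-GCCA construction: choose $\boldsymbol{f}_k\in\mathbb{R}^{r_k}$ whose entries form an orthonormal basis of $\operatorname{span}(\boldsymbol{x}_k^\top)$, $\boldsymbol{f}=(\boldsymbol{f}_1^\top,\dots,\boldsymbol{f}_K^\top)^\top$, and orthonormal eigenvectors $\boldsymbol{\eta}^{(\ell)}=((\boldsymbol{\eta}^{(\ell)}_1)^\top,\dots,(\boldsymbol{\eta}^{(\ell)}_K)^\top)^\top$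 ($\boldsymbol\eta^{(\ell)}_k\in\mathbb{R}^{r_k}$) of $\operatorname{cov}(\boldsymbol{f})$ for its $\ell$th largest eigenvalue $\lambda_\ell(\operatorname{cov}(\boldsymbol f))$, $\ell\le r_f$. Set $w^{(\ell)}=\lambda_\ell(\operatorname{cov}(\boldsymbol f))^{-1/2}(\boldsymbol{\eta}^{(\ell)})^\top\boldsymbol{f}$, and $z_k^{(\ell)}=(\boldsymbol{\eta}_k^{(\ell)}/\|\boldsymbol{\eta}_k^{(\ell)}\|_F)^\top\boldsymbol{f}_k$ if $\boldsymbol\eta^{(\ell)}_k\ne\boldsymbol0$ and $z_k^{(\ell)}=0$ otherwise. $\alpha^{(\ell)}$ is the real number such that, with $c^{(\ell)}=\alpha^{(\ell)}w^{(\ell)}$ and $d_k^{(\ell)}=z_k^{(\ell)}-c^{(\ell)}$, $|\alpha^{(\ell)}|$ is the smallest value of $|\alpha|$ for which at least one pair $j\ne k$ has $d^{(\ell)}_j\perp d^{(\ell)}_k$, and $\alpha^{(\ell)}<0$ if there are two such values (such $\alpha^{(\ell)}$ always exists). Let $L=\max\{\ell\le r_f:\lambda_\ell(\operatorname{cov}(\boldsymbol f))>1\}$, $\mathcal{I}_0=\{\ell\le L:\alpha^{(\ell)}\neq 0\}$, $\boldsymbol{z}_k^{\mathcal{I}_0}=(z_k^{(\ell)})^\top_{\ell\in\mathcal{I}_0}$, $\boldsymbol{c}^{\mathcal{I}_0}=(c^{(\ell)})^\top_{\ell\in\mathcal{I}_0}$ (increasing order of $\ell$). The common-source vector is $\boldsymbol{c}_k=\operatorname{cov}(\boldsymbol{x}_k,\boldsymbol{z}_k^{\mathcal{I}_0})\{\operatorname{cov}(\boldsymbol{z}_k^{\mathcal{I}_0})\}^{\dagger}\boldsymbol{c}^{\mathcal{I}_0}$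 if $\mathcal{I}_0\ne\emptyset$ and $\boldsymbol{c}_k=\boldsymbol{0}$ otherwise, where $\dagger$ is the Moore–Penrose pseudoinverse and $\operatorname{cov}(\boldsymbol u,\boldsymbol v)$ is the matrix with $(i,j)$ entry $\operatorname{cov}(u_i,v_j)$. *)

theory Defs
  imports "HOL-Analysis.Inner_Product" "Jordan_Normal_Form.Char_Poly"
    "HOL-Library.Multiset"
begin

text \<open>The ambient space: the paper works in L_0^2 (zero-mean, finite-variance random
variables, identified up to a.s. equality) with covariance as inner product.
We work in an arbitrary real inner product space 'v (type class real_inner),
with inner product playing the role of covariance.  Orthogonality means zero
inner product, the norm is the standard deviation.

Random vectors: block k (k < K, 0-indexed) is x k with entries x k i, i < p k.
A candidate D-GCCA choice consists of
  fv :: nat => 'v  -- the concatenated vector f = (f_1,...,f_K), where block k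
                      occupies positions offs r k .. offs r k + r k - 1
  eta :: nat => real vec -- eta l is the eigenvector eta^(l), l = 1..r_f,
                      an element of R^n (n = sum of the r_k), indexed like f.\<close>

definition span_blk :: "(nat \<Rightarrow> nat \<Rightarrow> 'v::real_inner) \<Rightarrow> (nat \<Rightarrow> nat) \<Rightarrow> nat \<Rightarrow> 'v set" where
  "span_blk x p k = span (x k ` {..<p k})"

definition rk :: "(nat \<Rightarrow> nat \<Rightarrow> 'v::real_inner) \<Rightarrow> (nat \<Rightarrow> nat) \<Rightarrow> nat \<Rightarrow> nat" where
  "rk x p k = dim (span_blk x p k)"

definition rf :: "(nat \<Rightarrow> nat \<Rightarrow> 'v::real_inner) \<Rightarrow> (nat \<Rightarrow> nat) \<Rightarrow> nat \<Rightarrow> nat" where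
  "rf x p K = dim (span (\<Union>k<K. span_blk x p k))"

definition offs :: "(nat \<Rightarrow> nat) \<Rightarrow> nat \<Rightarrow> nat" where
  "offs r k = (\<Sum>i<k. r i)"

definition cov_mat :: "(nat \<Rightarrow> 'v::real_inner) \<Rightarrow> nat \<Rightarrow> real mat" where
  "cov_mat v n = mat n n (\<lambda>(i,j). inner (v i) (v j))"

text \<open>lambda_l(A): the l-th largest eigenvalue (l >= 1), counted with algebraic
multiplicity, i.e. the roots of the characteristic polynomial sorted decreasingly.\<close>
definition eigval :: "real mat \<Rightarrow> nat \<Rightarrow> real" where
  "eigval A l = rev (sorted_list_of_multiset (proots (char_poly A))) ! (l - 1)"

definition pinv :: "real mat \<Rightarrow> real mat" where
  "pinv A = (THE X. X \<in> carrier_mat (dim_col A) (dim_row A) \<and>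
      A * X * A = A \<and> X * A * X = X \<and>
      transpose_mat (A * X) = A * X \<and> transpose_mat (X * A) = X * A)"

definition dgcca_choice ::
  "(nat \<Rightarrow> nat \<Rightarrow> 'v::real_inner) \<Rightarrow> (nat \<Rightarrow> nat) \<Rightarrow> nat \<Rightarrow> (nat \<Rightarrow> 'v) \<Rightarrow> (nat \<Rightarrow> real vec) \<Rightarrow> bool" where
  "dgcca_choice x p K fv eta \<longleftrightarrow>
     (let r = rk x p; n = offs r K; C = cov_mat fv n in
      \<comment> \<open>entries of f_k form an orthonormal basis of span(x_k)\<close>
      (\<forall>k<K. (\<forall>i<r k. \<forall>j<r k. inner (fv (offs r k + i)) (fv (offs r k + j)) = (if i = j then 1 else 0))
             \<and> span ((\<lambda>j. fv (offs r k + j)) ` {..<r k}) = span_blk x p k)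
      \<comment> \<open>eta^(1..r_f) orthonormal eigenvectors of cov(f) for lambda_1..lambda_{r_f}\<close>
    \<and> (\<forall>l\<in>{1..rf x p K}. eta l \<in> carrier_vec n \<and> C *\<^sub>v eta l = eigval C l \<cdot>\<^sub>v eta l)
    \<and> (\<forall>l\<in>{1..rf x p K}. \<forall>l'\<in>{1..rf x p K}. eta l \<bullet> eta l' = (if l = l' then 1 else 0)))"

context
  fixes x :: "nat \<Rightarrow> nat \<Rightarrow> 'v::real_inner" and p :: "nat \<Rightarrow> nat" and K :: nat
    and fv :: "nat \<Rightarrow> 'v" and eta :: "nat \<Rightarrow> real vec"
begin

definition dg_n :: nat where "dg_n = offs (rk x p) K"

definition dg_lambda :: "nat \<Rightarrow> real" where
  "dg_lambda l = eigval (cov_mat fv dg_n) l"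

definition dg_w :: "nat \<Rightarrow> 'v" where
  "dg_w l = (1 / sqrt (dg_lambda l)) *\<^sub>R (\<Sum>i<dg_n. (eta l $ i) *\<^sub>R fv i)"

definition dg_blknorm :: "nat \<Rightarrow> nat \<Rightarrow> real" where
  "dg_blknorm k l = sqrt (\<Sum>j<rk x p k. (eta l $ (offs (rk x p) k + j))\<^sup>2)"

definition dg_z :: "nat \<Rightarrow> nat \<Rightarrow> 'v" where
  "dg_z k l = (if (\<forall>j<rk x p k. eta l $ (offs (rk x p) k + j) = 0) then 0
     else (1 / dg_blknorm k l) *\<^sub>R (\<Sum>j<rk x p k. (eta l $ (offs (rk x p) k + j)) *\<^sub>R fv (offs (rk x p) k + j)))"

definition dg_Aset :: "nat \<Rightarrow> real set" where
  "dg_Aset l = {a. \<exists>j<K. \<exists>k<K. j \<noteq> k \<and> inner (dg_z j l - a *\<^sub>R dg_w l) (dg_z k l - a *\<^sub>R dg_w l) = 0}"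

definition dg_alpha :: "nat \<Rightarrow> real" where
  "dg_alpha l = (THE a. a \<in> dg_Aset l \<and> (\<forall>b\<in>dg_Aset l. \<bar>a\<bar> \<le> \<bar>b\<bar>) \<and>
                        (\<forall>b\<in>dg_Aset l. \<bar>b\<bar> = \<bar>a\<bar> \<longrightarrow> a \<le> b))"

definition dg_c :: "nat \<Rightarrow> 'v" where
  "dg_c l = dg_alpha l *\<^sub>R dg_w l"

definition dg_L :: nat where
  "dg_L = (if {l\<in>{1..rf x p K}. dg_lambda l > 1} = {} then 0
           else Max {l\<in>{1..rf x p K}. dg_lambda l > 1})"

definition dg_I0 :: "nat set" where
  "dg_I0 = {l\<in>{1..dg_L}. dg_alpha l \<noteq> 0}"

definition dg_I0list :: "nat list" where
  "dg_I0list = sorted_list_of_set dg_I0"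

definition dg_covz :: "nat \<Rightarrow> real mat" where
  "dg_covz k = mat (length dg_I0list) (length dg_I0list)
      (\<lambda>(a,b). inner (dg_z k (dg_I0list ! a)) (dg_z k (dg_I0list ! b)))"

definition dg_common :: "nat \<Rightarrow> nat \<Rightarrow> 'v" where
  "dg_common k i = (if dg_I0 = {} then 0 else
     (\<Sum>a<length dg_I0list. \<Sum>b<length dg_I0list.
        (inner (x k i) (dg_z k (dg_I0list ! a)) * pinv (dg_covz k) $$ (a,b))
          *\<^sub>R dg_c (dg_I0list ! b)))"

end

end

theory Submission
  imports Defs "Jordan_Normal_Form.Schur_Decomposition" "HOL-Computational_Algebra.Fundamental_Theorem_Algebra" "HOL-Analysis.Linear_Algebra"
begin
lemma real_cscalar: fixes v w :: "real vec" shows "v \<bullet>c w = v \<bullet> w"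
proof -
  have "conjugate w = w" by (rule eq_vecI) auto
  thus ?thesis by simp
qed

lemma sq_norm_pos: fixes v :: "real vec" assumes "v \<in> carrier_vec n" "v \<noteq> 0\<^sub>v n"
  shows "v \<bullet> v > 0"
proof -
  have "v \<bullet> v \<noteq> 0" using conjugate_square_eq_0_vec[OF assms(1)] assms real_cscalar by metis
  moreover have "v \<bullet> v \<ge> 0" unfolding scalar_prod_def by (auto intro: sum_nonneg)
  ultimately show ?thesis by auto
qed

lemma sym_real_eigenvalue:
  fixes A :: "real mat"
  assumes A: "A \<in> carrier_mat n n" and sym: "\<And>i j. i < n \<Longrightarrow> j < n \<Longrightarrow> A $$ (i,j) = A $$ (j,i)"
    and n: "n > 0"
  shows "\<exists>e. eigenvalue A e"
proof -
  let ?C = "of_real_hom.mat_hom A :: complex mat"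
  have C: "?C \<in> carrier_mat n n" using A by auto
  have cp: "char_poly ?C = map_poly of_real (char_poly A)" by (rule of_real_hom.char_poly_hom[OF A])
  have "degree (char_poly ?C) = n" using degree_monic_char_poly[OF C] by auto
  hence "\<not> constant (poly (char_poly ?C))" using n by (simp add: constant_degree)
  then obtain k where "poly (char_poly ?C) k = 0" using fundamental_theorem_of_algebra by blast
  hence "eigenvalue ?C k" using eigenvalue_root_char_poly[OF C] by auto
  then obtain v where v: "v \<in> carrier_vec n" "v \<noteq> 0\<^sub>v n" and ev: "?C *\<^sub>v v = k \<cdot>\<^sub>v v"
    unfolding eigenvalue_def eigenvector_def using C by auto
  have Cv: "(?C *\<^sub>v v) $ i = (\<Sum>j<n. of_real (A $$ (i,j)) * v $ j)" if "i < n" for i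
    using that A v by (auto simp: scalar_prod_def row_def atLeast0LessThan intro!: sum.cong)
  define s where "s = (\<Sum>i<n. cnj (v $ i) * (?C *\<^sub>v v) $ i)"
  define N where "N = (\<Sum>i<n. cnj (v $ i) * v $ i)"
  have s1: "s = k * N" unfolding s_def N_def ev using v by (auto simp: sum_distrib_left intro!: sum.cong)
  have s2: "s = (\<Sum>i<n. \<Sum>j<n. cnj (v $ i) * of_real (A $$ (i,j)) * v $ j)"
    unfolding s_def by (auto simp: Cv sum_distrib_left mult.assoc intro!: sum.cong)
  have "cnj s = (\<Sum>i<n. \<Sum>j<n. v $ i * of_real (A $$ (i,j)) * cnj (v $ j))"
    unfolding s2 by (simp add: cnj_sum)
  also have "\<dots> = (\<Sum>j<n. \<Sum>i<n. v $ i * of_real (A $$ (i,j)) * cnj (v $ j))"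
    by (rule sum.swap)
  also have "\<dots> = s" unfolding s2 by (auto simp: sym mult.commute mult.left_commute intro!: sum.cong)
  finally have cs: "cnj s = s" .
  have Nr: "N = of_real (\<Sum>i<n. (cmod (v $ i))\<^sup>2)"
    unfolding N_def of_real_sum by (intro sum.cong refl) (subst complex_norm_square, rule mult.commute)
  obtain i where i: "i < n" "v $ i \<noteq> 0" using v by (metis eq_vecI carrier_vecD index_zero_vec)
  have "(\<Sum>i<n. (cmod (v $ i))\<^sup>2) > 0"
    by (rule sum_pos2[of _ i], use i in auto)
  hence N0: "N \<noteq> 0" unfolding Nr by (simp del: of_real_sum of_real_power)
  have cN: "cnj N = N" unfolding Nr by (simp only: complex_cnj_complex_of_real)
  from cs s1 have "cnj k * N = k * N" using cN by simp
  hence kk: "cnj k = k" using N0 by simp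
  hence "k = of_real (Re k)" by (metis Reals_cnj_iff complex_is_Real_iff of_real_Re)
  hence "poly (char_poly A) (Re k) = 0"
    using \<open>poly (char_poly ?C) k = 0\<close> unfolding cp
    by (metis of_real_eq_0_iff of_real_hom.poly_map_poly)
  thus ?thesis using eigenvalue_root_char_poly[OF A] by blast
qed

lemma normalize_unit: fixes w :: "real vec" assumes "w \<in> carrier_vec n" "w \<noteq> 0\<^sub>v n"
  shows "((1 / sqrt (w \<bullet> w)) \<cdot>\<^sub>v w) \<bullet> ((1 / sqrt (w \<bullet> w)) \<cdot>\<^sub>v w) = 1"
proof -
  have p: "w \<bullet> w > 0" by (rule sq_norm_pos[OF assms])
  have "((1 / sqrt (w \<bullet> w)) \<cdot>\<^sub>v w) \<bullet> ((1 / sqrt (w \<bullet> w)) \<cdot>\<^sub>v w) = (1 / sqrt (w \<bullet> w))^2 * (w \<bullet> w)"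
    using assms by (simp add: power2_eq_square mult.assoc)
  also have "\<dots> = 1" using p by (simp add: power_divide)
  finally show ?thesis .
qed

lemma spectral:
  fixes A :: "real mat"
  assumes "A \<in> carrier_mat n n" "transpose_mat A = A"
  shows "\<exists>P D. P \<in> carrier_mat n n \<and> D \<in> carrier_mat n n \<and> diagonal_mat D \<and>
     P * transpose_mat P = 1\<^sub>m n \<and> transpose_mat P * P = 1\<^sub>m n \<and> A = P * D * transpose_mat P"
  using assms
proof (induct n arbitrary: A)
  case 0
  thus ?case by (intro exI[of _ "1\<^sub>m 0"] exI[of _ A]) (auto simp: diagonal_mat_def)
next
  case (Suc m A)
  define n where "n = Suc m"
  have A: "A \<in> carrier_mat n n" using Suc n_def by auto
  have sym: "A $$ (i,j) = A $$ (j,i)" if "i < n" "j < n" for i j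
    using Suc(3) that A by (metis carrier_matD index_transpose_mat(1))
  obtain e where e: "eigenvalue A e" using sym_real_eigenvalue[OF A sym] n_def by auto
  define v0 where "v0 = find_eigenvector A e"
  have ev0: "eigenvector A v0 e" unfolding v0_def by (rule find_eigenvector[OF A e])
  hence v0: "v0 \<in> carrier_vec n" "v0 \<noteq> 0\<^sub>v n" "A *\<^sub>v v0 = e \<cdot>\<^sub>v v0"
    unfolding eigenvector_def using A by auto
  define u where "u = (1 / sqrt (v0 \<bullet> v0)) \<cdot>\<^sub>v v0"
  have u: "u \<in> carrier_vec n" unfolding u_def using v0 by auto
  have uu: "u \<bullet> u = 1" unfolding u_def by (rule normalize_unit[OF v0(1,2)])
  have u0: "u \<noteq> 0\<^sub>v n" using uu u by auto
  have Au: "A *\<^sub>v u = e \<cdot>\<^sub>v u" unfolding u_def using v0 A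
    by (simp add: mult_mat_vec smult_smult_assoc mult.commute)
  interpret cof_vec_space n "TYPE(real)" .
  define b where "b = basis_completion u"
  from basis_completion[OF u u0, folded b_def]
  have span_b: "span (set b) = carrier_vec n" and dist_b: "distinct b" 
    and indep: "\<not> lin_dep (set b)" and b: "set b \<subseteq> carrier_vec n" and hdb: "hd b = u" 
    and len_b: "length b = n" by auto
  from hdb len_b n_def obtain vs where bv: "b = u # vs" by (cases b, auto)
  define ws where "ws = gram_schmidt n b"
  from gram_schmidt_result[OF b dist_b indep refl, folded ws_def]
  have ws: "set ws \<subseteq> carrier_vec n" "corthogonal ws" "length ws = n" 
    by (auto simp: len_b)
  from gram_schmidt_hd[OF u, of vs, folded bv] have hdws: "hd ws = u" unfolding ws_def .
  define nz where "nz = (\<lambda>w::real vec. (1 / sqrt (w \<bullet> w)) \<cdot>\<^sub>v w)"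
  define us where "us = map nz ws"
  have wsc: "ws ! i \<in> carrier_vec n" if "i < n" for i using ws that by auto
  have ws0: "ws ! i \<noteq> 0\<^sub>v n" if "i < n" for i
  proof
    assume "ws ! i = 0\<^sub>v n"
    hence "ws ! i \<bullet>c ws ! i = 0" by simp
    thus False using corthogonalD[OF ws(2), of i i] that ws(3) by auto
  qed
  have usc: "us ! i \<in> carrier_vec n" if "i < n" for i 
    using wsc[OF that] that ws(3) unfolding us_def nz_def by auto
  have lus: "length us = n" unfolding us_def using ws by auto
  have orth: "us ! i \<bullet> us ! j = (if i = j then 1 else 0)" if "i < n" "j < n" for i j
  proof (cases "i = j")
    case True thus ?thesis using normalize_unit[OF wsc ws0, OF that(1)] that ws(3)
      unfolding us_def nz_def by auto
  next
    case False
    have "ws ! i \<bullet> ws ! j = 0" using corthogonalD[OF ws(2), of i j] that ws(3) False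
      by (auto simp: real_cscalar)
    thus ?thesis using False that ws(3) wsc[OF that(1)] wsc[OF that(2)] unfolding us_def nz_def
      by (simp add: scalar_prod_smult_distrib smult_scalar_prod_distrib)
  qed
  have us0: "us ! 0 = u" 
  proof -
    have "ws ! 0 = u" using hdws ws(3) n_def by (cases ws, auto)
    thus ?thesis using uu ws(3) n_def unfolding us_def nz_def by auto
  qed
  define W where "W = mat_of_cols n us"
  have W: "W \<in> carrier_mat n n" unfolding W_def using lus by (metis mat_of_cols_carrier(1))
  have colW: "col W i = us ! i" if "i < n" for i unfolding W_def using that lus usc
    by (intro col_mat_of_cols) auto
  have WtW: "transpose_mat W * W = 1\<^sub>m n"
    by (rule eq_matI, insert W, auto simp: colW orth)
  have WWt: "W * transpose_mat W = 1\<^sub>m n"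
    using mat_mult_left_right_inverse[OF _ W WtW] W by auto
  define A' where "A' = transpose_mat W * A * W"
  have A': "A' \<in> carrier_mat n n" unfolding A'_def using W A by auto
  have A'ij: "A' $$ (i,j) = us ! i \<bullet> (A *\<^sub>v us ! j)" if "i < n" "j < n" for i j
  proof -
    have "A' $$ (i,j) = (transpose_mat W * (A * W)) $$ (i,j)" unfolding A'_def using W A by auto
    also have "\<dots> = row (transpose_mat W) i \<bullet> col (A * W) j" using that W A by auto
    also have "\<dots> = us ! i \<bullet> (A *\<^sub>v us ! j)" using that W A by (auto simp: colW mult_mat_vec_def)
    finally show ?thesis .
  qed
  have A'sym: "A' $$ (i,j) = A' $$ (j,i)" if "i < n" "j < n" for i j
  proof -
    have tA: "transpose_mat A = A" using Suc(3) by simp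
    have "transpose_mat A' = transpose_mat W * transpose_mat (transpose_mat W * A)" 
      unfolding A'_def by (rule transpose_mult[of _ n n _ n], insert W A, auto)
    also have "transpose_mat (transpose_mat W * A) = transpose_mat A * W"
      by (subst transpose_mult[of _ n n _ n], insert W A, auto)
    also have "transpose_mat W * (transpose_mat A * W) = A'" unfolding A'_def tA
      using W A by (simp add: assoc_mult_mat[of _ n n _ n _ n])
    finally have "transpose_mat A' = A'" .
    thus ?thesis using that A' by (metis carrier_matD index_transpose_mat(1))
  qed
  have A'col0: "A' $$ (i,0) = (if i = 0 then e else 0)" if "i < n" for i
  proof -
    have "A' $$ (i,0) = us ! i \<bullet> (A *\<^sub>v u)" using A'ij[OF that] n_def us0 by auto
    also have "\<dots> = e * (us ! i \<bullet> us ! 0)" unfolding Au us0 using usc[OF that] u by auto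
    finally show ?thesis using orth[OF that, of 0] n_def by auto
  qed
  obtain A1 A2 A0 A3 where splitA': "split_block A' 1 1 = (A1,A2,A0,A3)"
    by (cases "split_block A' 1 1", auto)
  from A' n_def have "dim_row A' = 1 + m" "dim_col A' = 1 + m" by auto
  from split_block[OF splitA' this] have A3: "A3 \<in> carrier_mat m m" 
    and A'block: "A' = four_block_mat A1 A2 A0 A3" by auto
  have A1id: "A1 = mat 1 1 (\<lambda> _. e)"
    using splitA'[unfolded split_block_def Let_def] A'col0 A' n_def by auto
  have A2id: "A2 = 0\<^sub>m 1 m"
  proof -
    have z: "A' $$ (0, Suc j) = 0" if "j < m" for j 
      using A'sym[of 0 "Suc j"] A'col0[of "Suc j"] that n_def by auto
    show ?thesis using splitA'[unfolded split_block_def Let_def] A' n_def z 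
      by (auto intro!: eq_matI)
  qed
  have A0id: "A0 = 0\<^sub>m m 1"
    using splitA'[unfolded split_block_def Let_def] A'col0 A' n_def by auto
  have A3id: "A3 = mat m m (\<lambda>(i,j). A' $$ (i+1, j+1))"
    using splitA'[unfolded split_block_def Let_def] A' n_def by auto
  have A3sym: "transpose_mat A3 = A3" unfolding A3id
    by (rule eq_matI, auto simp: A'sym n_def)
  from Suc(1)[OF A3 A3sym] obtain P3 D3 where P3: "P3 \<in> carrier_mat m m" and D3: "D3 \<in> carrier_mat m m"
    and dD3: "diagonal_mat D3" and PP3: "P3 * transpose_mat P3 = 1\<^sub>m m" 
    and A3eq: "A3 = P3 * D3 * transpose_mat P3" by blast
  define Pb where "Pb = four_block_mat (1\<^sub>m 1) (0\<^sub>m 1 m) (0\<^sub>m m 1) P3"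
  define Db where "Db = four_block_mat A1 (0\<^sub>m 1 m) (0\<^sub>m m 1) D3"
  have A1: "A1 \<in> carrier_mat 1 1" unfolding A1id by auto
  have Pb: "Pb \<in> carrier_mat n n" unfolding Pb_def n_def using P3 by auto
  have Db: "Db \<in> carrier_mat n n" unfolding Db_def n_def using D3 A1 by auto
  have tPb: "transpose_mat Pb = four_block_mat (1\<^sub>m 1) (0\<^sub>m 1 m) (0\<^sub>m m 1) (transpose_mat P3)"
    unfolding Pb_def by (subst transpose_four_block_mat[of _ 1 1 _ m _ m], insert P3, auto)
  have PPb: "Pb * transpose_mat Pb = 1\<^sub>m n" unfolding tPb unfolding Pb_def
    by (subst mult_four_block_mat[of _ 1 1 _ m _ m _ _ 1 _ m], insert P3 PP3, auto simp: n_def)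
  have "Pb * Db * transpose_mat Pb = four_block_mat A1 (0\<^sub>m 1 m) (0\<^sub>m m 1) (P3 * D3 * transpose_mat P3)"
    unfolding tPb unfolding Pb_def Db_def
    by (subst mult_four_block_mat[of _ 1 1 _ m _ m _ _ 1 _ m], insert P3 D3 A1, auto,
        subst mult_four_block_mat[of _ 1 1 _ m _ m _ _ 1 _ m], insert P3 D3 A1, auto)
  hence A'eq: "A' = Pb * Db * transpose_mat Pb" unfolding A'block A2id A0id A3eq by simp
  have dDb: "diagonal_mat Db" unfolding diagonal_mat_def Db_def using dD3 D3 A1
    by (auto simp: diagonal_mat_def A1id)
  define P where "P = W * Pb"
  have P: "P \<in> carrier_mat n n" unfolding P_def using W Pb by auto
  have tP: "transpose_mat P = transpose_mat Pb * transpose_mat W"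
    unfolding P_def by (rule transpose_mult[OF W Pb])
  have "P * transpose_mat P = W * (Pb * transpose_mat Pb) * transpose_mat W" 
    unfolding tP unfolding P_def using W Pb by (simp add: assoc_mult_mat[of _ n n _ n _ n])
  hence PP: "P * transpose_mat P = 1\<^sub>m n" using PPb WWt W by simp
  have PP': "transpose_mat P * P = 1\<^sub>m n" using mat_mult_left_right_inverse[OF P _ PP] P by auto
  have "W * A' * transpose_mat W = (W * transpose_mat W) * A * (W * transpose_mat W)" 
    unfolding A'_def using W A by (simp add: assoc_mult_mat[of _ n n _ n _ n])
  hence "A = W * A' * transpose_mat W" using WWt A by simp
  also have "\<dots> = P * Db * transpose_mat P" unfolding A'eq tP unfolding P_def using W Pb Db
    by (simp add: assoc_mult_mat[of _ n n _ n _ n])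
  finally show ?case using P Db dDb PP PP' unfolding n_def by blast
qed



definition penrose :: "real mat \<Rightarrow> real mat \<Rightarrow> bool" where
  "penrose A X \<longleftrightarrow> X \<in> carrier_mat (dim_col A) (dim_row A) \<and>
      A * X * A = A \<and> X * A * X = X \<and>
      transpose_mat (A * X) = A * X \<and> transpose_mat (X * A) = X * A"

lemma penrose_unique:
  assumes A: "A \<in> carrier_mat m m" and X: "penrose A X" and Y: "penrose A Y"
  shows "X = Y"
proof -
  note T = transpose_mult[of _ m m _ m]
  from X A have Xc: "X \<in> carrier_mat m m" and X1: "A * X * A = A" and X2: "X * A * X = X"
    and X3: "transpose_mat (A * X) = A * X" and X4: "transpose_mat (X * A) = X * A"
    unfolding penrose_def by auto
  from Y A have Yc: "Y \<in> carrier_mat m m" and Y1: "A * Y * A = A" and Y2: "Y * A * Y = Y"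
    and Y3: "transpose_mat (A * Y) = A * Y" and Y4: "transpose_mat (Y * A) = Y * A"
    unfolding penrose_def by auto
  have TX: "transpose_mat X \<in> carrier_mat m m" "transpose_mat Y \<in> carrier_mat m m"
     "transpose_mat A \<in> carrier_mat m m" using Xc Yc A by auto
  have "X = X * (A * X)" using X2 Xc A by (simp add: assoc_mult_mat[of _ m m _ m _ m])
  also have "\<dots> = X * transpose_mat (A * X)" using X3 by simp
  also have "\<dots> = X * (transpose_mat X * transpose_mat A)" using T[OF A Xc] by simp
  also have "transpose_mat A = transpose_mat (A * Y * A)" using Y1 by simp
  also have "\<dots> = transpose_mat A * (transpose_mat Y * transpose_mat A)" 
    using A Yc by (simp add: T assoc_mult_mat[of _ m m _ m _ m])
  also have "X * (transpose_mat X * (transpose_mat A * (transpose_mat Y * transpose_mat A)))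
     = X * ((transpose_mat X * transpose_mat A) * (transpose_mat Y * transpose_mat A))"
    using Xc TX by (simp add: assoc_mult_mat[of _ m m _ m _ m])
  also have "\<dots> = X * (transpose_mat (A * X) * transpose_mat (A * Y))" by (simp add: T[OF A Xc] T[OF A Yc] T[OF Xc A] T[OF Yc A])
  also have "\<dots> = X * A * X * A * Y" unfolding X3 Y3 using Xc Yc A
    by (simp add: assoc_mult_mat[of _ m m _ m _ m])
  also have "\<dots> = X * A * Y" unfolding X2 ..
  finally have 1: "X = X * A * Y" .
  have "Y = (Y * A) * Y" using Y2 Yc A by (simp add: assoc_mult_mat[of _ m m _ m _ m])
  also have "\<dots> = transpose_mat (Y * A) * Y" using Y4 by simp
  also have "\<dots> = (transpose_mat A * transpose_mat Y) * Y" using T[OF Yc A] by simp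
  also have "transpose_mat A = transpose_mat (A * X * A)" using X1 by simp
  also have "\<dots> = (transpose_mat A * transpose_mat X) * transpose_mat A" 
    using A Xc by (simp add: T assoc_mult_mat[of _ m m _ m _ m])
  also have "((transpose_mat A * transpose_mat X) * transpose_mat A) * transpose_mat Y * Y
     = ((transpose_mat A * transpose_mat X) * (transpose_mat A * transpose_mat Y)) * Y"
    using Xc TX by (simp add: assoc_mult_mat[of _ m m _ m _ m])
  also have "\<dots> = (transpose_mat (X * A) * transpose_mat (Y * A)) * Y" by (simp add: T[OF A Xc] T[OF A Yc] T[OF Xc A] T[OF Yc A])
  also have "\<dots> = X * A * (Y * A * Y)" unfolding X4 Y4 using Xc Yc A
    by (simp add: assoc_mult_mat[of _ m m _ m _ m])
  also have "\<dots> = X * A * Y" unfolding Y2 ..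
  finally have 2: "Y = X * A * Y" .
  from 1 2 show ?thesis by simp
qed


lemma penrose_conj:
  assumes A: "A \<in> carrier_mat m m" and P: "P \<in> carrier_mat m m"
    and PP: "transpose_mat P * P = 1\<^sub>m m" and X: "penrose A X"
  shows "penrose (P * A * transpose_mat P) (P * X * transpose_mat P)"
proof -
  note T = transpose_mult[of _ m m _ m]
  from X A have Xc: "X \<in> carrier_mat m m" and X1: "A * X * A = A" and X2: "X * A * X = X"
    and X3: "transpose_mat (A * X) = A * X" and X4: "transpose_mat (X * A) = X * A"
    unfolding penrose_def by auto
  have Pt: "transpose_mat P \<in> carrier_mat m m" using P by auto
  note as = assoc_mult_mat[of _ m m _ m _ m]
  have e1: "P * A * transpose_mat P * (P * X * transpose_mat P) = P * (A * X) * transpose_mat P"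
    using A P Xc PP by (simp add: as, simp add: as[symmetric, of "transpose_mat P" P] Pt)
  have e2: "P * X * transpose_mat P * (P * A * transpose_mat P) = P * (X * A) * transpose_mat P"
    using A P Xc PP by (simp add: as, simp add: as[symmetric, of "transpose_mat P" P] Pt)
  have tr: "transpose_mat (P * M * transpose_mat P) = P * transpose_mat M * transpose_mat P"
    if M: "M \<in> carrier_mat m m" for M
    using M P Pt by (simp add: T as)
  have "P * A * transpose_mat P * (P * X * transpose_mat P) * (P * A * transpose_mat P)
     = P * (A * X * A) * transpose_mat P"
    unfolding e1 using A P Xc PP by (simp add: as, simp add: as[symmetric, of "transpose_mat P" P] Pt)
  moreover have "P * X * transpose_mat P * (P * A * transpose_mat P) * (P * X * transpose_mat P)
     = P * (X * A * X) * transpose_mat P"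
    unfolding e2 using A P Xc PP by (simp add: as, simp add: as[symmetric, of "transpose_mat P" P] Pt)
  ultimately show ?thesis unfolding penrose_def e1 e2 X1 X2
    using tr[of "A * X"] tr[of "X * A"] X3 X4 A Xc P by auto
qed

definition dmat :: "nat \<Rightarrow> (nat \<Rightarrow> real) \<Rightarrow> real mat" where
  "dmat m d = mat m m (\<lambda>(i,j). if i = j then d i else 0)"

lemma dmat_mult: "dmat m a * dmat m b = dmat m (\<lambda>i. a i * b i)"
proof (rule eq_matI)
  fix i j assume ij: "i < dim_row (dmat m (\<lambda>i. a i * b i))" "j < dim_col (dmat m (\<lambda>i. a i * b i))"
  hence "(dmat m a * dmat m b) $$ (i,j) = (\<Sum>k\<in>{0..<m}. (if i = k then a i else 0) * (if k = j then b k else 0))"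
    by (auto simp: dmat_def scalar_prod_def)
  also have "\<dots> = (\<Sum>k\<in>{0..<m}. if k = i then (if i = j then a i * b i else 0) else 0)"
    by (rule sum.cong) auto
  also have "\<dots> = dmat m (\<lambda>i. a i * b i) $$ (i,j)" using ij by (simp add: dmat_def)
  finally show "(dmat m a * dmat m b) $$ (i,j) = dmat m (\<lambda>i. a i * b i) $$ (i,j)" .
qed (auto simp: dmat_def)

lemma diagonal_dmat: assumes "D \<in> carrier_mat m m" "diagonal_mat D"
  shows "D = dmat m (\<lambda>i. D $$ (i,i))"
  using assms by (auto simp: dmat_def diagonal_mat_def intro!: eq_matI)

lemma penrose_dmat: "penrose (dmat m d) (dmat m (\<lambda>i. if d i = 0 then 0 else 1 / d i))"
  unfolding penrose_def dmat_mult by (auto simp: dmat_def intro!: eq_matI)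

lemma penrose_exists:
  assumes A: "A \<in> carrier_mat m m" and sA: "transpose_mat A = A"
  shows "\<exists>X. penrose A X"
proof -
  from spectral[OF A sA] obtain P D where P: "P \<in> carrier_mat m m" and D: "D \<in> carrier_mat m m"
    and dD: "diagonal_mat D" and PP: "transpose_mat P * P = 1\<^sub>m m" and AE: "A = P * D * transpose_mat P"
    by blast
  have "D = dmat m (\<lambda>i. D $$ (i,i))" by (rule diagonal_dmat[OF D dD])
  hence "penrose D (dmat m (\<lambda>i. if D $$ (i,i) = 0 then 0 else 1 / D $$ (i,i)))"
    using penrose_dmat by metis
  from penrose_conj[OF D P PP this] show ?thesis unfolding AE by blast
qed

lemma penrose_pinv:
  assumes A: "A \<in> carrier_mat m m" and sA: "transpose_mat A = A"
  shows "penrose A (pinv A)"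
proof -
  have ex: "\<exists>!X. penrose A X" using penrose_exists[OF A sA] penrose_unique[OF A] by blast
  show ?thesis unfolding pinv_def using theI'[OF ex] unfolding penrose_def by simp
qed

lemma pinv_conj:
  assumes A: "A \<in> carrier_mat m m" and sA: "transpose_mat A = A" and P: "P \<in> carrier_mat m m"
    and PP: "transpose_mat P * P = 1\<^sub>m m"
  shows "pinv (P * A * transpose_mat P) = P * pinv A * transpose_mat P"
proof -
  have B: "P * A * transpose_mat P \<in> carrier_mat m m" using A P by auto
  have sB: "transpose_mat (P * A * transpose_mat P) = P * A * transpose_mat P"
    using A P sA by (simp add: transpose_mult[of _ m m _ m] assoc_mult_mat[of _ m m _ m _ m])
  show ?thesis by (rule penrose_unique[OF B penrose_pinv[OF B sB] penrose_conj[OF A P PP penrose_pinv[OF A sA]]])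
qed



lemma proots_linprod: "proots (\<Prod>a\<leftarrow>ds. [:- a, 1:]) = mset (ds :: real list)"
proof (induct ds)
  case (Cons a ds)
  have "(\<Prod>a\<leftarrow>ds. [:- a, 1:]) \<noteq> (0 :: real poly)" 
    by (auto simp: prod_list_zero_iff)
  hence "proots ([:- a, 1:] * (\<Prod>a\<leftarrow>ds. [:- a, 1:])) = proots [:- a, 1:] + mset ds"
    using Cons by (subst proots_mult) auto
  thus ?case by (simp only: prod_list.Cons list.map proots_linear_factor minus_minus) simp
qed simp

lemma sym_eig_facts:
  fixes A :: "real mat"
  assumes A: "A \<in> carrier_mat n n" and sA: "transpose_mat A = A"
  shows "size (proots (char_poly A)) = n"
    and "\<And>e u v. count (proots (char_poly A)) e \<le> 1 \<Longrightarrow> u \<in> carrier_vec n \<Longrightarrow> v \<in> carrier_vec n \<Longrightarrow>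
      A *\<^sub>v u = e \<cdot>\<^sub>v u \<Longrightarrow> A *\<^sub>v v = e \<cdot>\<^sub>v v \<Longrightarrow> u \<noteq> 0\<^sub>v n \<Longrightarrow> \<exists>c. v = c \<cdot>\<^sub>v u"
proof -
  from spectral[OF A sA] obtain P D where P: "P \<in> carrier_mat n n" and D: "D \<in> carrier_mat n n"
    and dD: "diagonal_mat D" and PP: "P * transpose_mat P = 1\<^sub>m n" and PP': "transpose_mat P * P = 1\<^sub>m n"
    and AE: "A = P * D * transpose_mat P"
    by blast
  have "similar_mat A D" unfolding similar_mat_def
    by (rule exI[of _ P], rule exI[of _ "transpose_mat P"], unfold similar_mat_wit_def Let_def, insert P D A PP PP' AE, auto)
  hence cpe: "char_poly A = char_poly D" by (rule char_poly_similar)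
  have ut: "upper_triangular D" using dD D unfolding upper_triangular_def diagonal_mat_def by auto
  have cpD: "char_poly D = (\<Prod>a\<leftarrow>diag_mat D. [:- a, 1:])" by (rule char_poly_upper_triangular[OF D ut])
  have pr: "proots (char_poly A) = mset (diag_mat D)" unfolding cpe cpD proots_linprod ..
  show "size (proots (char_poly A)) = n" unfolding pr using D by (simp add: diag_mat_def)
  fix e u v
  assume cnt: "count (proots (char_poly A)) e \<le> 1" and u: "u \<in> carrier_vec n" and v: "v \<in> carrier_vec n"
    and Au: "A *\<^sub>v u = e \<cdot>\<^sub>v u" and Av: "A *\<^sub>v v = e \<cdot>\<^sub>v v" and u0: "u \<noteq> 0\<^sub>v n"
  have Pt: "transpose_mat P \<in> carrier_mat n n" using P by auto
  have uniq: "i = j" if "i < n" "j < n" "D $$ (i,i) = e" "D $$ (j,j) = e" for i j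
  proof (rule ccontr)
    assume ij: "i \<noteq> j"
    have "count (mset (diag_mat D)) e = card {k. k < n \<and> D $$ (k,k) = e}"
      unfolding count_mset count_list_eq_length_filter length_filter_conv_card diag_mat_def using D
      by (auto intro!: arg_cong[where f=card])
    also have "\<dots> \<ge> card {i, j}" 
      by (rule card_mono) (auto simp: that)
    finally have "count (mset (diag_mat D)) e \<ge> 2" using ij by simp
    thus False using cnt pr by simp
  qed
  have key: "(transpose_mat P *\<^sub>v x) $ i = 0" 
    if x: "x \<in> carrier_vec n" "A *\<^sub>v x = e \<cdot>\<^sub>v x" and i: "i < n" "D $$ (i,i) \<noteq> e" for x i
  proof -
    define w where "w = transpose_mat P *\<^sub>v x"
    have w: "w \<in> carrier_vec n" unfolding w_def using Pt x by auto
    have xw: "x = P *\<^sub>v w" unfolding w_def using P Pt x PP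
      by (metis assoc_mult_mat_vec one_mult_mat_vec)
    have PPy: "transpose_mat P *\<^sub>v (P *\<^sub>v y) = y" if "y \<in> carrier_vec n" for y
      using assoc_mult_mat_vec[OF Pt P that, symmetric] PP' that by simp
    have Ax: "A *\<^sub>v x = P *\<^sub>v (D *\<^sub>v w)" unfolding AE w_def using P D Pt x
      by (simp add: assoc_mult_mat_vec[of _ n n _ n])
    have "D *\<^sub>v w = transpose_mat P *\<^sub>v (A *\<^sub>v x)" unfolding Ax using D w by (simp add: PPy)
    also have "\<dots> = e \<cdot>\<^sub>v w" unfolding x(2) w_def using Pt x by (simp add: mult_mat_vec)
    finally have Dw: "D *\<^sub>v w = e \<cdot>\<^sub>v w" .
    have "(D *\<^sub>v w) $ i = D $$ (i,i) * w $ i"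
    proof -
      have "(D *\<^sub>v w) $ i = (\<Sum>k\<in>{0..<n}. D $$ (i,k) * w $ k)" using D w i by (auto simp: scalar_prod_def)
      also have "\<dots> = (\<Sum>k\<in>{0..<n}. if k = i then D $$ (i,i) * w $ i else 0)"
        by (rule sum.cong, insert dD D i, auto simp: diagonal_mat_def)
      finally show ?thesis using i by simp
    qed
    hence "D $$ (i,i) * w $ i = e * w $ i" using Dw w i by (metis index_smult_vec(1) carrier_vecD)
    thus ?thesis using i unfolding w_def by auto
  qed
  define wu where "wu = transpose_mat P *\<^sub>v u"
  define wv where "wv = transpose_mat P *\<^sub>v v"
  have wuc: "wu \<in> carrier_vec n" "wv \<in> carrier_vec n" unfolding wu_def wv_def using Pt u v by auto
  have uw: "u = P *\<^sub>v wu" "v = P *\<^sub>v wv" unfolding wu_def wv_def using P Pt u v PP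
    by (metis assoc_mult_mat_vec one_mult_mat_vec)+
  have "wu \<noteq> 0\<^sub>v n" using u0 uw P by auto
  then obtain i0 where i0: "i0 < n" "wu $ i0 \<noteq> 0" using wuc by (metis eq_vecI carrier_vecD index_zero_vec)
  have Di0: "D $$ (i0,i0) = e" using key[OF u Au i0(1)] i0 unfolding wu_def by auto
  define c where "c = wv $ i0 / wu $ i0"
  have "wv = c \<cdot>\<^sub>v wu"
  proof (rule eq_vecI)
    fix i assume "i < dim_vec (c \<cdot>\<^sub>v wu)"
    hence i: "i < n" using wuc by auto
    show "wv $ i = (c \<cdot>\<^sub>v wu) $ i"
    proof (cases "i = i0")
      case True thus ?thesis using i0 i wuc unfolding c_def by auto
    next
      case False
      hence "D $$ (i,i) \<noteq> e" using uniq[OF i i0(1) _ Di0] by auto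
      hence "wu $ i = 0" "wv $ i = 0" using key[OF u Au i] key[OF v Av i] unfolding wu_def wv_def by auto
      thus ?thesis using i wuc by simp
    qed
  qed (use wuc in auto)
  hence "v = c \<cdot>\<^sub>v u" unfolding uw using P wuc by (simp add: mult_mat_vec)
  thus "\<exists>c. v = c \<cdot>\<^sub>v u" by blast
qed

lemma sorted_count_neighbor:
  fixes M :: "real multiset"
  assumes xs: "xs = rev (sorted_list_of_multiset M)" and i: "i < length xs" and c: "count M (xs ! i) \<ge> 2"
  shows "(0 < i \<and> xs ! (i - 1) = xs ! i) \<or> (Suc i < length xs \<and> xs ! Suc i = xs ! i)"
proof -
  have "sorted (rev xs)" unfolding xs by simp
  hence sw: "sorted_wrt (\<ge>) xs" by (simp add: sorted_wrt_rev)
  have mono: "xs ! k \<le> xs ! j" if "j < k" "k < length xs" for j k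
    using sw that by (auto simp: sorted_wrt_iff_nth_less)
  have M: "M = mset xs" unfolding xs by simp
  have "count M (xs ! i) = card {k. k < length xs \<and> xs ! k = xs ! i}"
    unfolding M count_mset count_list_eq_length_filter length_filter_conv_card
    by (auto intro!: arg_cong[where f=card])
  with c have cg: "card {k. k < length xs \<and> xs ! k = xs ! i} \<ge> 2" by simp
  obtain j where j: "j < length xs" "xs ! j = xs ! i" "j \<noteq> i"
  proof (rule ccontr)
    assume "\<not> thesis"
    with that have "{k. k < length xs \<and> xs ! k = xs ! i} \<subseteq> {i}" by auto
    hence "card {k. k < length xs \<and> xs ! k = xs ! i} \<le> 1" 
      using card_mono[of "{i}"] by fastforce
    with cg show False by simp
  qed
  show ?thesis
  proof (cases "j < i")
    case True
    have "xs ! (i - 1) \<le> xs ! j" using mono[of j "i - 1"] True i by (cases "j = i - 1") auto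
    moreover have "xs ! i \<le> xs ! (i - 1)" using mono[of "i - 1" i] True i by auto
    ultimately show ?thesis using True j by auto
  next
    case False
    hence ij: "i < j" using j by auto
    have "xs ! j \<le> xs ! Suc i" using mono[of "Suc i" j] ij j by (cases "j = Suc i") auto
    moreover have "xs ! Suc i \<le> xs ! i" using mono[of i "Suc i"] ij j by auto
    ultimately show ?thesis using ij j by auto
  qed
qed

definition inblk :: "(nat \<Rightarrow> nat) \<Rightarrow> nat \<Rightarrow> nat \<Rightarrow> bool" where
  "inblk r k a \<longleftrightarrow> offs r k \<le> a \<and> a < offs r k + r k"

lemma offs_Suc: "offs r (Suc k) = offs r k + r k"
  unfolding offs_def by simp

lemma offs_mono: "k \<le> k' \<Longrightarrow> offs r k \<le> offs r k'"
  unfolding offs_def by (rule sum_mono2) auto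

lemma offs_bound: "k < K \<Longrightarrow> j < r k \<Longrightarrow> offs r k + j < offs r K"
  using offs_mono[of "Suc k" K r] offs_Suc[of r k] by auto

lemma inblk_unique: "inblk r k a \<Longrightarrow> inblk r k' a \<Longrightarrow> k = k'"
proof (rule ccontr)
  assume a: "inblk r k a" "inblk r k' a" "k \<noteq> k'"
  show False
  proof (cases "k < k'")
    case True
    hence "offs r (Suc k) \<le> offs r k'" by (intro offs_mono) auto
    thus False using a unfolding inblk_def offs_Suc by auto
  next
    case False
    hence "offs r (Suc k') \<le> offs r k" using a by (intro offs_mono) auto
    thus False using a unfolding inblk_def offs_Suc by auto
  qed
qed

lemma inblk_at: "j < r k \<Longrightarrow> inblk r k (offs r k + j)"
  unfolding inblk_def by auto

lemma inblk_at_iff: "j < r k' \<Longrightarrow> inblk r k (offs r k' + j) \<longleftrightarrow> k = k'"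
  using inblk_unique inblk_at by metis

lemma inblk_exists: "a < offs r K \<Longrightarrow> \<exists>k<K. inblk r k a"
proof (induct K)
  case (Suc K)
  show ?case
  proof (cases "a < offs r K")
    case True thus ?thesis using Suc by (meson less_SucI)
  next
    case False thus ?thesis using Suc(2) unfolding offs_Suc inblk_def by (intro exI[of _ K]) auto
  qed
qed (simp add: offs_def)

lemma inblk_dest: "inblk r k a \<Longrightarrow> \<exists>j<r k. a = offs r k + j"
  unfolding inblk_def by (intro exI[of _ "a - offs r k"]) auto

lemma sum_add_split: "(\<Sum>i<a + (b::nat). g i) = (\<Sum>i<a. g i) + (\<Sum>j<b. g (a + j))"
  by (induct b) (auto simp: add.assoc)

lemma sum_blocks: "(\<Sum>i<offs r K. g i) = (\<Sum>k<K. \<Sum>j<r k. g (offs r k + j))"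
  by (induct K) (auto simp: offs_Suc sum_add_split, simp add: offs_def)

lemma sum_in_block: assumes "k < K"
  shows "(\<Sum>i<offs r K. if inblk r k i then g i else 0) = (\<Sum>j<r k. g (offs r k + j))"
proof -
  have "(\<Sum>i<offs r K. if inblk r k i then g i else 0) = 
     (\<Sum>k'<K. \<Sum>j<r k'. if inblk r k (offs r k' + j) then g (offs r k' + j) else 0)"
    by (rule sum_blocks)
  also have "\<dots> = (\<Sum>k'<K. if k' = k then (\<Sum>j<r k. g (offs r k + j)) else 0)"
    by (rule sum.cong[OF refl], rule trans[OF sum.cong[OF refl]], rule if_cong[OF inblk_at_iff refl refl], auto)
  also have "\<dots> = (\<Sum>j<r k. g (offs r k + j))" using assms by simp
  finally show ?thesis .
qed


context fixes b :: "nat \<Rightarrow> 'v::real_inner" and m :: nat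
  assumes orth: "\<And>i j. i < m \<Longrightarrow> j < m \<Longrightarrow> inner (b i) (b j) = (if i = j then 1 else 0)"
begin

lemma on_coeff: "j < m \<Longrightarrow> inner (\<Sum>i<m. a i *\<^sub>R b i) (b j) = a j"
proof -
  assume j: "j < m"
  have "inner (\<Sum>i<m. a i *\<^sub>R b i) (b j) = (\<Sum>i<m. a i * inner (b i) (b j))"
    by (simp add: inner_sum_left)
  also have "\<dots> = (\<Sum>i<m. if i = j then a j else 0)" by (rule sum.cong) (auto simp: orth j)
  finally show ?thesis using j by simp
qed

lemma on_inner: "inner (\<Sum>i<m. a i *\<^sub>R b i) (\<Sum>i<m. c i *\<^sub>R b i) = (\<Sum>i<m. a i * c i)"
proof -
  have "inner (\<Sum>i<m. a i *\<^sub>R b i) (\<Sum>i<m. c i *\<^sub>R b i) = (\<Sum>i<m. c i * inner (\<Sum>i<m. a i *\<^sub>R b i) (b i))"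
    by (simp add: inner_sum_right)
  also have "\<dots> = (\<Sum>i<m. a i * c i)" by (rule sum.cong) (auto simp: on_coeff)
  finally show ?thesis .
qed

lemma on_span_mem: "(\<Sum>i<m. a i *\<^sub>R b i) \<in> span (b ` {..<m})"
  by (intro span_sum span_scale span_base) auto

lemma on_expand: "y \<in> span (b ` {..<m}) \<Longrightarrow> y = (\<Sum>i<m. inner y (b i) *\<^sub>R b i)"
proof -
  assume y: "y \<in> span (b ` {..<m})"
  show ?thesis
  proof (rule span_induct_alt[OF y, where h = "\<lambda>y. y = (\<Sum>i<m. inner y (b i) *\<^sub>R b i)"])
    show "0 = (\<Sum>i<m. inner 0 (b i) *\<^sub>R b i)" by simp
  next
    fix c z y assume z: "z \<in> b ` {..<m}" and yh: "y = (\<Sum>i<m. inner y (b i) *\<^sub>R b i)"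
    from z obtain j where j: "j < m" "z = b j" by auto
    have "(\<Sum>i<m. inner (b j) (b i) *\<^sub>R b i) = (\<Sum>i<m. if i = j then b j else 0)"
      by (rule sum.cong) (auto simp: orth j)
    hence zz: "z = (\<Sum>i<m. inner z (b i) *\<^sub>R b i)" using j by simp
    have "c *\<^sub>R z + y = c *\<^sub>R (\<Sum>i<m. inner z (b i) *\<^sub>R b i) + (\<Sum>i<m. inner y (b i) *\<^sub>R b i)"
      using zz yh by simp
    also have "\<dots> = (\<Sum>i<m. inner (c *\<^sub>R z + y) (b i) *\<^sub>R b i)"
      by (simp add: inner_add_left scaleR_add_left sum.distrib scaleR_sum_right)
    finally show "c *\<^sub>R z + y = (\<Sum>i<m. inner (c *\<^sub>R z + y) (b i) *\<^sub>R b i)" .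
  qed
qed

lemma on_parseval: "y \<in> span (b ` {..<m}) \<Longrightarrow> y' \<in> span (b ` {..<m}) \<Longrightarrow>
   inner y y' = (\<Sum>i<m. inner y (b i) * inner y' (b i))"
  by (subst on_expand[of y], assumption, subst on_expand[of y'], assumption, rule on_inner)

end




definition Yb :: "(nat \<Rightarrow> nat) \<Rightarrow> (nat \<Rightarrow> 'v::real_inner) \<Rightarrow> nat \<Rightarrow> real vec \<Rightarrow> 'v" where
  "Yb r f k \<eta> = (\<Sum>j<r k. (\<eta> $ (offs r k + j)) *\<^sub>R f (offs r k + j))"

definition Yv :: "(nat \<Rightarrow> 'v::real_inner) \<Rightarrow> nat \<Rightarrow> real vec \<Rightarrow> 'v" where
  "Yv f n \<eta> = (\<Sum>i<n. (\<eta> $ i) *\<^sub>R f i)"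

definition blkok :: "(nat \<Rightarrow> nat \<Rightarrow> 'v::real_inner) \<Rightarrow> (nat \<Rightarrow> nat) \<Rightarrow> (nat \<Rightarrow> 'v) \<Rightarrow> nat \<Rightarrow> bool" where
  "blkok x p f k \<longleftrightarrow> (\<forall>i<rk x p k. \<forall>j<rk x p k. inner (f (offs (rk x p) k + i)) (f (offs (rk x p) k + j)) = (if i = j then 1 else 0))
             \<and> span ((\<lambda>j. f (offs (rk x p) k + j)) ` {..<rk x p k}) = span_blk x p k"

lemma choice_blkok: "dgcca_choice x p K f eta \<Longrightarrow> k < K \<Longrightarrow> blkok x p f k"
  unfolding dgcca_choice_def blkok_def Let_def by auto

context fixes x :: "nat \<Rightarrow> nat \<Rightarrow> 'v::real_inner" and p f k
  assumes ok: "blkok x p f k"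
begin

lemma ok_orth: "i < rk x p k \<Longrightarrow> j < rk x p k \<Longrightarrow> inner (f (offs (rk x p) k + i)) (f (offs (rk x p) k + j)) = (if i = j then 1 else 0)"
  using ok unfolding blkok_def by auto

lemma ok_span: "span ((\<lambda>j. f (offs (rk x p) k + j)) ` {..<rk x p k}) = span_blk x p k"
  using ok unfolding blkok_def by auto

lemma Yb_coeff: "j < rk x p k \<Longrightarrow> inner (Yb (rk x p) f k \<eta>) (f (offs (rk x p) k + j)) = \<eta> $ (offs (rk x p) k + j)"
  unfolding Yb_def by (rule on_coeff[where b = "\<lambda>j. f (offs (rk x p) k + j)"], rule ok_orth)

lemma Yb_norm2: "inner (Yb (rk x p) f k \<eta>) (Yb (rk x p) f k \<eta>) = (\<Sum>j<rk x p k. (\<eta> $ (offs (rk x p) k + j))\<^sup>2)"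
  unfolding Yb_def by (subst on_inner[where b = "\<lambda>j. f (offs (rk x p) k + j)", OF ok_orth]) (auto simp: power2_eq_square)

lemma Yb_span: "Yb (rk x p) f k \<eta> \<in> span_blk x p k"
  unfolding Yb_def ok_span[symmetric] by (rule on_span_mem[where b = "\<lambda>j. f (offs (rk x p) k + j)", OF ok_orth])

lemma f_span: "j < rk x p k \<Longrightarrow> f (offs (rk x p) k + j) \<in> span_blk x p k"
  unfolding ok_span[symmetric] by (rule span_base) auto

lemma blk_expand: "y \<in> span_blk x p k \<Longrightarrow> y = (\<Sum>j<rk x p k. inner y (f (offs (rk x p) k + j)) *\<^sub>R f (offs (rk x p) k + j))"
  unfolding ok_span[symmetric] by (rule on_expand[where b = "\<lambda>j. f (offs (rk x p) k + j)"], rule ok_orth)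

lemma blk_parseval: "y \<in> span_blk x p k \<Longrightarrow> y' \<in> span_blk x p k \<Longrightarrow>
   inner y y' = (\<Sum>j<rk x p k. inner y (f (offs (rk x p) k + j)) * inner y' (f (offs (rk x p) k + j)))"
  unfolding ok_span[symmetric] by (rule on_parseval[where b = "\<lambda>j. f (offs (rk x p) k + j)"], rule ok_orth)

lemma blk_inner_expand: "y \<in> span_blk x p k \<Longrightarrow> 
   inner y z = (\<Sum>j<rk x p k. inner y (f (offs (rk x p) k + j)) * inner (f (offs (rk x p) k + j)) z)"
  by (subst blk_expand, assumption) (simp add: inner_sum_left)

lemma Yb_zero_iff: "Yb (rk x p) f k \<eta> = 0 \<longleftrightarrow> (\<forall>j<rk x p k. \<eta> $ (offs (rk x p) k + j) = 0)"
proof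
  assume h: "Yb (rk x p) f k \<eta> = 0"
  show "\<forall>j<rk x p k. \<eta> $ (offs (rk x p) k + j) = 0"
  proof (intro allI impI)
    fix j assume j: "j < rk x p k"
    from Yb_coeff[OF j, of \<eta>] h show "\<eta> $ (offs (rk x p) k + j) = 0" by simp
  qed
qed (simp add: Yb_def)

lemma blknorm_Yb: "dg_blknorm x p eta k l = norm (Yb (rk x p) f k (eta l))"
  unfolding dg_blknorm_def norm_eq_sqrt_inner Yb_norm2 ..

lemma z_Yb: "dg_z x p f eta k l = (if Yb (rk x p) f k (eta l) = 0 then 0 
    else (1 / norm (Yb (rk x p) f k (eta l))) *\<^sub>R Yb (rk x p) f k (eta l))"
  unfolding dg_z_def Yb_zero_iff blknorm_Yb by (simp add: Yb_def)

end

lemma Yv_blocks: "Yv f (offs r K) \<eta> = (\<Sum>k<K. Yb r f k \<eta>)"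
  unfolding Yv_def Yb_def by (rule sum_blocks)

lemma w_Yv: "dg_w x p K f eta l = (1 / sqrt (dg_lambda x p K f l)) *\<^sub>R Yv f (dg_n x p K) (eta l)"
  unfolding dg_w_def Yv_def ..


definition Tm :: "(nat \<Rightarrow> nat) \<Rightarrow> nat \<Rightarrow> (nat \<Rightarrow> 'v::real_inner) \<Rightarrow> (nat \<Rightarrow> 'v) \<Rightarrow> real mat" where
  "Tm r K f2 f1 = mat (offs r K) (offs r K) (\<lambda>(a,b). \<Sum>k<K. if inblk r k a \<and> inblk r k b then inner (f2 a) (f1 b) else 0)"

lemma mat_mult_entry: "A \<in> carrier_mat n n \<Longrightarrow> B \<in> carrier_mat n n \<Longrightarrow> i < n \<Longrightarrow> j < n \<Longrightarrow>
  (A * B) $$ (i,j) = (\<Sum>k<n. A $$ (i,k) * B $$ (k,j))"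
  by (auto simp: scalar_prod_def atLeast0LessThan intro!: sum.cong)

lemma mat_vec_entry: "A \<in> carrier_mat n n \<Longrightarrow> v \<in> carrier_vec n \<Longrightarrow> i < n \<Longrightarrow>
  (A *\<^sub>v v) $ i = (\<Sum>k<n. A $$ (i,k) * v $ k)"
  by (auto simp: scalar_prod_def atLeast0LessThan intro!: sum.cong)

context fixes x :: "nat \<Rightarrow> nat \<Rightarrow> 'v::real_inner" and p K f1 f2 r n
  assumes ok1: "\<And>k. k < K \<Longrightarrow> blkok x p f1 k" and ok2: "\<And>k. k < K \<Longrightarrow> blkok x p f2 k"
    and r_def: "r = rk x p" and n_def: "n = offs r K"
begin

abbreviation "T \<equiv> Tm r K f2 f1"

lemma T_carrier: "T \<in> carrier_mat n n" unfolding Tm_def n_def by auto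

lemma T_entry: assumes a: "a < n" and b: "b < n" and k: "k < K" and ak: "inblk r k a"
  shows "T $$ (a,b) = (if inblk r k b then inner (f2 a) (f1 b) else 0)"
proof -
  have "T $$ (a,b) = (\<Sum>k'<K. if inblk r k' a \<and> inblk r k' b then inner (f2 a) (f1 b) else 0)"
    unfolding Tm_def using a b n_def by auto
  also have "\<dots> = (\<Sum>k'<K. if k' = k then (if inblk r k b then inner (f2 a) (f1 b) else 0) else 0)"
    proof (rule sum.cong[OF refl])
    fix k' show "(if inblk r k' a \<and> inblk r k' b then inner (f2 a) (f1 b) else 0) = (if k' = k then (if inblk r k b then inner (f2 a) (f1 b) else 0) else 0)"
    proof (cases "k' = k")
      case False hence "\<not> inblk r k' a" using inblk_unique[OF ak, of k'] by metis
      thus ?thesis using False by simp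
    qed (simp add: ak)
  qed
  finally show ?thesis using k by simp
qed

lemma T_entry': assumes a: "a < n" and b: "b < n" and k: "k < K" and bk: "inblk r k b"
  shows "T $$ (a,b) = (if inblk r k a then inner (f2 a) (f1 b) else 0)"
proof -
  have "T $$ (a,b) = (\<Sum>k'<K. if inblk r k' a \<and> inblk r k' b then inner (f2 a) (f1 b) else 0)"
    unfolding Tm_def using a b n_def by auto
  also have "\<dots> = (\<Sum>k'<K. if k' = k then (if inblk r k a then inner (f2 a) (f1 b) else 0) else 0)"
    proof (rule sum.cong[OF refl])
    fix k' show "(if inblk r k' a \<and> inblk r k' b then inner (f2 a) (f1 b) else 0) = (if k' = k then (if inblk r k a then inner (f2 a) (f1 b) else 0) else 0)"
    proof (cases "k' = k")
      case False hence "\<not> inblk r k' b" using inblk_unique[OF bk, of k'] by metis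
      thus ?thesis using False by simp
    qed (simp add: bk)
  qed
  finally show ?thesis using k by simp
qed

lemma T_rowsum: assumes k: "k < K" and j: "j < r k"
  shows "(\<Sum>b<n. T $$ (offs r k + j, b) * g b) = (\<Sum>j'<r k. inner (f2 (offs r k + j)) (f1 (offs r k + j')) * g (offs r k + j'))"
proof -
  have a: "offs r k + j < n" unfolding n_def using offs_bound k j by auto
  have "(\<Sum>b<n. T $$ (offs r k + j, b) * g b) = (\<Sum>b<n. if inblk r k b then inner (f2 (offs r k + j)) (f1 b) * g b else 0)"
    by (rule sum.cong[OF refl]) (auto simp: T_entry[OF a _ k inblk_at[of j r k, OF j]])
  also have "\<dots> = (\<Sum>j'<r k. inner (f2 (offs r k + j)) (f1 (offs r k + j')) * g (offs r k + j'))"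
    unfolding n_def by (rule sum_in_block[OF k])
  finally show ?thesis .
qed

lemma T_colsum: assumes k: "k < K" and j: "j < r k"
  shows "(\<Sum>a<n. T $$ (a, offs r k + j) * g a) = (\<Sum>j'<r k. inner (f2 (offs r k + j')) (f1 (offs r k + j)) * g (offs r k + j'))"
proof -
  have b: "offs r k + j < n" unfolding n_def using offs_bound k j by auto
  have "(\<Sum>a<n. T $$ (a, offs r k + j) * g a) = (\<Sum>a<n. if inblk r k a then inner (f2 a) (f1 (offs r k + j)) * g a else 0)"
    by (rule sum.cong[OF refl]) (auto simp: T_entry'[OF _ b k inblk_at[of j r k, OF j]])
  also have "\<dots> = (\<Sum>j'<r k. inner (f2 (offs r k + j')) (f1 (offs r k + j)) * g (offs r k + j'))"
    unfolding n_def by (rule sum_in_block[OF k])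
  finally show ?thesis .
qed

lemma idx_cases: assumes "a < n" obtains k j where "k < K" "j < r k" "a = offs r k + j"
  using inblk_exists[of a r K] assms inblk_dest unfolding n_def by blast

lemma T_vec: assumes k: "k < K" and j: "j < r k" and eta: "\<eta> \<in> carrier_vec n"
  shows "(T *\<^sub>v \<eta>) $ (offs r k + j) = inner (f2 (offs r k + j)) (Yb r f1 k \<eta>)"
proof -
  have a: "offs r k + j < n" unfolding n_def using offs_bound k j by auto
  have "(T *\<^sub>v \<eta>) $ (offs r k + j) = (\<Sum>b<n. T $$ (offs r k + j, b) * \<eta> $ b)"
    by (rule mat_vec_entry[OF T_carrier eta a])
  also have "\<dots> = inner (f2 (offs r k + j)) (Yb r f1 k \<eta>)"
    unfolding T_rowsum[OF k j] Yb_def by (simp add: inner_sum_right mult.commute)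
  finally show ?thesis .
qed

lemma Yb_T: assumes k: "k < K" and eta: "\<eta> \<in> carrier_vec n"
  shows "Yb r f2 k (T *\<^sub>v \<eta>) = Yb r f1 k \<eta>"
proof -
  have "Yb r f2 k (T *\<^sub>v \<eta>) = (\<Sum>j<r k. inner (Yb r f1 k \<eta>) (f2 (offs r k + j)) *\<^sub>R f2 (offs r k + j))"
    unfolding Yb_def[of r f2] by (rule sum.cong[OF refl]) (simp add: T_vec[OF k _ eta] inner_commute)
  also have "\<dots> = Yb r f1 k \<eta>"
    by (rule blk_expand[OF ok2[OF k], symmetric, folded r_def], rule Yb_span[OF ok1[OF k], folded r_def])
  finally show ?thesis .
qed


lemma TtT_one: "transpose_mat T * T = 1\<^sub>m n"
proof (rule eq_matI)
  fix b c assume "b < dim_row (1\<^sub>m n)" "c < dim_col (1\<^sub>m n)"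
  hence b: "b < n" and c: "c < n" by auto
  obtain kb jb where kb: "kb < K" "jb < r kb" and bb: "b = offs r kb + jb" using idx_cases[OF b] by blast
  have "(transpose_mat T * T) $$ (b,c) = (\<Sum>a<n. T $$ (a,b) * T $$ (a,c))"
    using mat_mult_entry[of "transpose_mat T" n T b c] T_carrier b c by auto
  also have "\<dots> = (\<Sum>j'<r kb. inner (f2 (offs r kb + j')) (f1 b) * T $$ (offs r kb + j', c))"
    unfolding bb by (rule T_colsum[OF kb])
  also have "\<dots> = (\<Sum>j'<r kb. if inblk r kb c then inner (f2 (offs r kb + j')) (f1 b) * inner (f2 (offs r kb + j')) (f1 c) else 0)"
    by (rule sum.cong[OF refl], subst T_entry[OF _ c kb(1) inblk_at[of _ r kb]], insert kb offs_bound[where r=r and k=kb and K=K] n_def, auto)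
  also have "\<dots> = 1\<^sub>m n $$ (b,c)"
  proof (cases "inblk r kb c")
    case True
    then obtain jc where jc: "jc < r kb" "c = offs r kb + jc" using inblk_dest by blast
    have "(\<Sum>j'<r kb. inner (f2 (offs r kb + j')) (f1 b) * inner (f2 (offs r kb + j')) (f1 c)) = inner (f1 b) (f1 c)"
      using blk_parseval[OF ok2[OF kb(1)], of "f1 b" "f1 c"] f_span[OF ok1[OF kb(1)]] kb jc bb
      unfolding r_def by (simp add: inner_commute)
    also have "\<dots> = (if jb = jc then 1 else 0)" unfolding bb jc(2) using ok_orth[OF ok1[OF kb(1)]] kb jc r_def by auto
    finally show ?thesis using True b c bb jc by auto
  next
    case False
    hence "b \<noteq> c" using inblk_at[of jb r kb] kb bb by auto
    thus ?thesis using False b c by auto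
  qed
  finally show "(transpose_mat T * T) $$ (b,c) = 1\<^sub>m n $$ (b,c)" .
next
  show "dim_row (transpose_mat T * T) = dim_row (1\<^sub>m n)" using T_carrier by simp
next
  show "dim_col (transpose_mat T * T) = dim_col (1\<^sub>m n)" using T_carrier by simp
qed

lemma TTt_one: "T * transpose_mat T = 1\<^sub>m n"
  by (rule mat_mult_left_right_inverse[OF _ T_carrier TtT_one]) (use T_carrier in simp)

lemma G_sim: "cov_mat f2 n = T * cov_mat f1 n * transpose_mat T"
proof (rule eq_matI)
  fix a c assume "a < dim_row (T * cov_mat f1 n * transpose_mat T)" "c < dim_col (T * cov_mat f1 n * transpose_mat T)"
  hence a: "a < n" and c: "c < n" using T_carrier by (auto simp: cov_mat_def)
  obtain ka ja where ka: "ka < K" "ja < r ka" and aa: "a = offs r ka + ja" using idx_cases[OF a] by blast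
  obtain kc jc where kc: "kc < K" "jc < r kc" and cc: "c = offs r kc + jc" using idx_cases[OF c] by blast
  have G1: "cov_mat f1 n \<in> carrier_mat n n" unfolding cov_mat_def by auto
  have Tt: "transpose_mat T \<in> carrier_mat n n" using T_carrier by auto
  have inner_b: "(cov_mat f1 n * transpose_mat T) $$ (b,c) = inner (f2 c) (f1 b)" if b: "b < n" for b
  proof -
    have "(cov_mat f1 n * transpose_mat T) $$ (b,c) = (\<Sum>d<n. T $$ (c,d) * inner (f1 b) (f1 d))"
      using mat_mult_entry[OF G1 Tt b c] T_carrier b c by (auto simp: cov_mat_def mult.commute intro!: sum.cong)
    also have "\<dots> = (\<Sum>j'<r kc. inner (f2 c) (f1 (offs r kc + j')) * inner (f1 b) (f1 (offs r kc + j')))"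
      unfolding cc by (rule T_rowsum[OF kc])
    also have "\<dots> = inner (f2 c) (f1 b)"
      using blk_inner_expand[OF ok1[OF kc(1)], of "f2 c" "f1 b"] f_span[OF ok2[OF kc(1)]] kc cc
      unfolding r_def by (simp add: inner_commute)
    finally show ?thesis .
  qed
  have "(T * cov_mat f1 n * transpose_mat T) $$ (a,c) = (T * (cov_mat f1 n * transpose_mat T)) $$ (a,c)"
    using T_carrier G1 Tt by (simp add: assoc_mult_mat[of _ n n _ n _ n])
  also have "\<dots> = (\<Sum>b<n. T $$ (a,b) * inner (f2 c) (f1 b))"
    using mat_mult_entry[of T n "cov_mat f1 n * transpose_mat T" a c] T_carrier G1 Tt a c inner_b by auto
  also have "\<dots> = (\<Sum>j'<r ka. inner (f2 a) (f1 (offs r ka + j')) * inner (f2 c) (f1 (offs r ka + j')))"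
    unfolding aa by (rule T_rowsum[OF ka])
  also have "\<dots> = inner (f2 a) (f2 c)"
    using blk_inner_expand[OF ok1[OF ka(1)], of "f2 a" "f2 c"] f_span[OF ok2[OF ka(1)]] ka aa
    unfolding r_def by (simp add: inner_commute)
  also have "\<dots> = cov_mat f2 n $$ (a,c)" using a c by (simp add: cov_mat_def)
  finally show "cov_mat f2 n $$ (a,c) = (T * cov_mat f1 n * transpose_mat T) $$ (a,c)" by simp
qed (use T_carrier in \<open>auto simp: cov_mat_def\<close>)

end




lemma eigval_mono:
  assumes sz: "size (proots (char_poly A)) = n" and ab: "1 \<le> a" "a \<le> b" "b \<le> n"
  shows "eigval A b \<le> eigval A a"
proof -
  define xs where "xs = rev (sorted_list_of_multiset (proots (char_poly A)))"
  have len: "length xs = n" unfolding xs_def using sz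
    by (metis length_rev mset_sorted_list_of_multiset size_mset)
  have "sorted (rev xs)" unfolding xs_def by simp
  hence sw: "sorted_wrt (\<ge>) xs" by (simp add: sorted_wrt_rev)
  show ?thesis
  proof (cases "a = b")
    case False
    hence "a - 1 < b - 1" using ab by auto
    thus ?thesis using sw ab len unfolding eigval_def xs_def[symmetric]
      by (auto simp: sorted_wrt_iff_nth_less)
  qed simp
qed

lemma eig_unique:
  fixes G :: "real mat" and E :: "nat \<Rightarrow> real vec" and lam :: "nat \<Rightarrow> real"
  assumes G: "G \<in> carrier_mat n n" and sG: "transpose_mat G = G"
    and symf: "\<And>u v. u \<in> carrier_vec n \<Longrightarrow> v \<in> carrier_vec n \<Longrightarrow> u \<bullet> (G *\<^sub>v v) = v \<bullet> (G *\<^sub>v u)"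
    and lam: "lam = eigval G"
    and E: "\<And>l. l \<in> {1..R} \<Longrightarrow> E l \<in> carrier_vec n \<and> G *\<^sub>v E l = lam l \<cdot>\<^sub>v E l"
    and Eo: "\<And>l l'. l \<in> {1..R} \<Longrightarrow> l' \<in> {1..R} \<Longrightarrow> E l \<bullet> E l' = (if l = l' then 1 else 0)"
    and rfn: "R \<le> n"
    and L: "1 \<le> L" "L \<le> R" "lam L > 1" "\<And>l. l \<in> {1..R} \<Longrightarrow> lam l > 1 \<Longrightarrow> l \<le> L"
    and dist: "\<And>l l'. l \<in> {1..L} \<Longrightarrow> l' \<in> {1..L} \<Longrightarrow> l \<noteq> l' \<Longrightarrow> lam l \<noteq> lam l'"
    and H: "\<And>V. finite V \<Longrightarrow> V \<subseteq> carrier_vec n \<Longrightarrow> (\<forall>u\<in>V. \<forall>v\<in>V. u \<noteq> v \<longrightarrow> u \<bullet> (G *\<^sub>v v) = 0)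
              \<Longrightarrow> (\<forall>u\<in>V. u \<bullet> (G *\<^sub>v u) \<noteq> 0) \<Longrightarrow> card V \<le> R"
    and l: "l \<in> {1..L}" and u: "u \<in> carrier_vec n" "G *\<^sub>v u = lam l \<cdot>\<^sub>v u" "u \<noteq> 0\<^sub>v n"
  shows "\<exists>c. E l = c \<cdot>\<^sub>v u"
proof -
  have lrf: "l \<in> {1..R}" using l L by auto
  note El = E[OF lrf]
  have sz: "size (proots (char_poly G)) = n" by (rule sym_eig_facts(1)[OF G sG])
  show ?thesis
  proof (cases "count (proots (char_poly G)) (lam l) \<le> 1")
    case True
    show ?thesis by (rule sym_eig_facts(2)[OF G sG True u(1) _ u(2) _ u(3)], insert El, auto)
  next
    case False
    define xs where "xs = rev (sorted_list_of_multiset (proots (char_poly G)))"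
    have len: "length xs = n" unfolding xs_def using sz
      by (metis length_rev mset_sorted_list_of_multiset size_mset)
    have ev: "lam j = xs ! (j - 1)" for j unfolding lam eigval_def xs_def ..
    have i: "l - 1 < length xs" using len l L rfn by auto
    have c2: "count (proots (char_poly G)) (xs ! (l - 1)) \<ge> 2" using False ev[of l] by simp
    from sorted_count_neighbor[OF xs_def i c2]
    have nb: "(0 < l - 1 \<and> xs ! (l - 1 - 1) = xs ! (l - 1)) \<or> (Suc (l - 1) < length xs \<and> xs ! Suc (l - 1) = xs ! (l - 1))" .
    have lL: "l = L \<and> L = R"
    proof -
      have "\<not> (0 < l - 1 \<and> xs ! (l - 1 - 1) = xs ! (l - 1))"
      proof
        assume a: "0 < l - 1 \<and> xs ! (l - 1 - 1) = xs ! (l - 1)"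
        hence "lam (l - 1) = lam l" using ev[of "l - 1"] ev[of l] by simp
        moreover have "l - 1 \<in> {1..L}" "l - 1 \<noteq> l" using a l by auto
        ultimately show False using dist[of "l - 1" l] l by blast
      qed
      with nb have b: "xs ! Suc (l - 1) = xs ! (l - 1)" by auto
      hence eq: "lam (l + 1) = lam l" using ev[of "l + 1"] ev[of l] l by auto
      have "l = L"
      proof (rule ccontr)
        assume "l \<noteq> L" hence "l + 1 \<in> {1..L}" using l by auto
        thus False using dist[of "l + 1" l] eq l by auto
      qed
      moreover have "L = R"
      proof (rule ccontr)
        assume "L \<noteq> R" hence "L + 1 \<in> {1..R}" using L by auto
        moreover have "lam (L + 1) > 1" using eq \<open>l = L\<close> L by auto
        ultimately show False using L(4)[of "L + 1"] by auto
      qed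
      ultimately show ?thesis by simp
    qed
    show ?thesis
    proof (rule ccontr)
      assume nex: "\<not> (\<exists>c. E l = c \<cdot>\<^sub>v u)"
      define c0 where "c0 = u \<bullet> E l"
      define w where "w = u - c0 \<cdot>\<^sub>v E l"
      have w: "w \<in> carrier_vec n" unfolding w_def using u El by auto
      have w0: "w \<noteq> 0\<^sub>v n"
      proof
        assume w00: "w = 0\<^sub>v n"
        have uc: "u = c0 \<cdot>\<^sub>v E l"
        proof (rule eq_vecI)
          fix i assume "i < dim_vec (c0 \<cdot>\<^sub>v E l)"
          hence i: "i < n" using El by auto
          have "w $ i = 0" using w00 i by simp
          thus "u $ i = (c0 \<cdot>\<^sub>v E l) $ i" using i u El unfolding w_def by auto
        qed (use u El in auto)
        hence "c0 \<noteq> 0" using u(3) El by auto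
        hence "E l = (1 / c0) \<cdot>\<^sub>v u" unfolding uc using El by (auto simp: smult_smult_assoc)
        thus False using nex by blast
      qed
      have "G *\<^sub>v w = G *\<^sub>v u - c0 \<cdot>\<^sub>v (G *\<^sub>v E l)" unfolding w_def using G u El
        by (simp add: mult_minus_distrib_mat_vec mult_mat_vec)
      also have "\<dots> = lam l \<cdot>\<^sub>v w" unfolding u(2) El[THEN conjunct2] w_def
        by (rule eq_vecI) (use u El in \<open>auto simp: algebra_simps\<close>)
      finally have Gw: "G *\<^sub>v w = lam l \<cdot>\<^sub>v w" .
      have wEl: "w \<bullet> E l = 0" unfolding w_def c0_def using u El Eo[OF lrf lrf]
        by (simp add: minus_scalar_prod_distrib)
      have wE: "w \<bullet> E b = 0" if b: "b \<in> {1..R}" for b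
      proof (cases "b = l")
        case True thus ?thesis using wEl by simp
      next
        case False
        have bL: "b \<in> {1..L}" using b lL by auto
        have "lam l * (w \<bullet> E b) = (G *\<^sub>v w) \<bullet> E b" unfolding Gw using w E[OF b] by simp
        also have "\<dots> = E b \<bullet> (G *\<^sub>v w)" using w E[OF b] G by (simp add: comm_scalar_prod[of _ n])
        also have "\<dots> = w \<bullet> (G *\<^sub>v E b)" using symf[of "E b" w] w E[OF b] by simp
        also have "\<dots> = lam b * (w \<bullet> E b)" using E[OF b] w by simp
        finally have "(lam l - lam b) * (w \<bullet> E b) = 0" by (simp add: algebra_simps)
        thus ?thesis using dist[OF l bL] False by auto
      qed
      have lampos: "lam b > 0" if b: "b \<in> {1..R}" for b
      proof -
        have "lam L \<le> lam b" unfolding lam using eigval_mono[OF sz, of b L] b lL rfn by auto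
        thus ?thesis using L by auto
      qed
      define V where "V = insert w (E ` {1..R})"
      have EV: "E b \<noteq> w" if "b \<in> {1..R}" for b using wE[OF that] Eo[OF that that] by auto
      have inj: "inj_on E {1..R}"
        by (rule inj_onI) (metis Eo zero_neq_one)
      have wn: "w \<notin> E ` {1..R}" using EV by force
      have cardV: "card V = R + 1" unfolding V_def using wn inj
        by (subst card_insert_disjoint) (auto simp: card_image)
      have "card V \<le> R"
      proof (rule H)
        show "finite V" unfolding V_def by simp
        show "V \<subseteq> carrier_vec n" unfolding V_def using w E by auto
        show "\<forall>a\<in>V. \<forall>b\<in>V. a \<noteq> b \<longrightarrow> a \<bullet> (G *\<^sub>v b) = 0"
        proof (intro ballI impI)
          fix a b assume a: "a \<in> V" and b: "b \<in> V" and ab: "a \<noteq> b"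
          have GEw: "E c \<bullet> (G *\<^sub>v w) = 0" if c: "c \<in> {1..R}" for c
          proof -
            have "E c \<bullet> (G *\<^sub>v w) = lam l * (E c \<bullet> w)" unfolding Gw using w E[OF c] by simp
            also have "E c \<bullet> w = w \<bullet> E c" using w E[OF c] by (simp add: comm_scalar_prod[of _ n])
            finally show ?thesis using wE[OF c] by simp
          qed
          have wGE: "w \<bullet> (G *\<^sub>v E c) = 0" if c: "c \<in> {1..R}" for c
            using E[OF c] wE[OF c] w by simp
          show "a \<bullet> (G *\<^sub>v b) = 0"
          proof (cases "a = w")
            case True
            then obtain c where "c \<in> {1..R}" "b = E c" using b ab unfolding V_def by auto
            thus ?thesis using True wGE by simp
          next
            case False
            then obtain c where c: "c \<in> {1..R}" "a = E c" using a unfolding V_def by auto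
            show ?thesis
            proof (cases "b = w")
              case True thus ?thesis using c GEw by simp
            next
              case False
              then obtain d where d: "d \<in> {1..R}" "b = E d" using b unfolding V_def by auto
              hence "c \<noteq> d" using ab c by auto
              have Ed: "E d \<in> carrier_vec n" "G *\<^sub>v E d = lam d \<cdot>\<^sub>v E d" using E[OF d(1)] by auto
              have Ec: "E c \<in> carrier_vec n" using E[OF c(1)] by auto
              show ?thesis using c d Ed Ec Eo[OF c(1) d(1)] \<open>c \<noteq> d\<close> by simp
            qed
          qed
        qed
        show "\<forall>a\<in>V. a \<bullet> (G *\<^sub>v a) \<noteq> 0"
        proof
          fix a assume a: "a \<in> V"
          show "a \<bullet> (G *\<^sub>v a) \<noteq> 0"
          proof (cases "a = w")
            case True
            have "w \<bullet> (G *\<^sub>v w) = lam l * (w \<bullet> w)" unfolding Gw using w by simp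
            moreover have "w \<bullet> w > 0" by (rule sq_norm_pos[OF w w0])
            ultimately show ?thesis using True lampos[OF lrf] by auto
          next
            case False
            then obtain c where c: "c \<in> {1..R}" "a = E c" using a unfolding V_def by auto
            thus ?thesis using E[OF c(1)] Eo[OF c(1) c(1)] lampos[OF c(1)] by simp
          qed
        qed
      qed
      thus False using cardV by simp
    qed
  qed
qed


lemma cov_carrier: "cov_mat f n \<in> carrier_mat n n" unfolding cov_mat_def by auto

lemma cov_sym: "transpose_mat (cov_mat f n) = cov_mat f n"
  unfolding cov_mat_def by (rule eq_matI) (auto simp: inner_commute)

lemma Yv_inner: assumes "\<eta> \<in> carrier_vec n" "\<eta>' \<in> carrier_vec n"
  shows "inner (Yv f n \<eta>) (Yv f n \<eta>') = \<eta> \<bullet> (cov_mat f n *\<^sub>v \<eta>')"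
proof -
  have "inner (Yv f n \<eta>) (Yv f n \<eta>') = (\<Sum>i<n. \<eta> $ i * (\<Sum>j<n. inner (f i) (f j) * \<eta>' $ j))"
    unfolding Yv_def by (simp add: inner_sum_left inner_sum_right sum_distrib_left mult_ac, subst sum.swap, simp add: mult_ac)
  also have "\<dots> = \<eta> \<bullet> (cov_mat f n *\<^sub>v \<eta>')" using assms
    by (auto simp: scalar_prod_def atLeast0LessThan mat_vec_entry[OF cov_carrier] cov_mat_def intro!: sum.cong)
  finally show ?thesis .
qed

lemma cov_symf: "u \<in> carrier_vec n \<Longrightarrow> v \<in> carrier_vec n \<Longrightarrow> u \<bullet> (cov_mat f n *\<^sub>v v) = v \<bullet> (cov_mat f n *\<^sub>v u)"
  using Yv_inner[of u n v f] Yv_inner[of v n u f] by (simp add: inner_commute)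

context fixes x :: "nat \<Rightarrow> nat \<Rightarrow> 'v::real_inner" and p K f
  assumes ok: "\<And>k. k < K \<Longrightarrow> blkok x p f k"
begin

abbreviation "S \<equiv> span (\<Union>k<K. span_blk x p k)"
abbreviation "nn \<equiv> offs (rk x p) K"

lemma f_in_S: "i < nn \<Longrightarrow> f i \<in> S"
proof -
  assume i: "i < nn"
  obtain k j where k: "k < K" "j < rk x p k" "i = offs (rk x p) k + j"
    using inblk_exists[OF i] inblk_dest by blast
  have "f i \<in> span_blk x p k" using f_span[OF ok[OF k(1)] k(2)] k(3) by simp
  thus ?thesis using k(1) by (intro span_base) auto
qed

lemma Yv_in_S: "Yv f nn \<eta> \<in> S"
  unfolding Yv_def by (intro span_sum span_scale) (auto intro: f_in_S)

lemma U_sub: "(\<Union>k<K. span_blk x p k) \<subseteq> span (f ` {..<nn})"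
proof
  fix y assume "y \<in> (\<Union>k<K. span_blk x p k)"
  then obtain k where k: "k < K" "y \<in> span_blk x p k" by auto
  have "(\<lambda>j. f (offs (rk x p) k + j)) ` {..<rk x p k} \<subseteq> f ` {..<nn}"
    using offs_bound[of k K] k by auto
  hence "span_blk x p k \<subseteq> span (f ` {..<nn})" unfolding ok_span[OF ok[OF k(1)], symmetric]
    by (rule span_mono)
  thus "y \<in> span (f ` {..<nn})" using k by auto
qed

lemma S_sub: "S \<subseteq> span (f ` {..<nn})"
  using U_sub span_minimal[OF U_sub] by (auto simp: subspace_span)

lemma rf_le_n: "rf x p K \<le> nn"
proof -
  have "rf x p K \<le> card (f ` {..<nn})" unfolding rf_def
    by (rule dim_le_card) (use S_sub in auto)
  also have "\<dots> \<le> nn" using card_image_le[of "{..<nn}" f] by simp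
  finally show ?thesis .
qed

lemma H_bound:
  assumes V: "finite V" "V \<subseteq> carrier_vec nn"
    and orth: "\<forall>u\<in>V. \<forall>v\<in>V. u \<noteq> v \<longrightarrow> u \<bullet> (cov_mat f nn *\<^sub>v v) = 0"
    and nz: "\<forall>u\<in>V. u \<bullet> (cov_mat f nn *\<^sub>v u) \<noteq> 0"
  shows "card V \<le> rf x p K"
proof -
  define Z where "Z = Yv f nn ` V"
  have inj: "inj_on (Yv f nn) V"
  proof (rule inj_onI, rule ccontr)
    fix u v assume u: "u \<in> V" and v: "v \<in> V" and eq: "Yv f nn u = Yv f nn v" and ne: "u \<noteq> v"
    have "u \<bullet> (cov_mat f nn *\<^sub>v u) = inner (Yv f nn u) (Yv f nn v)"
      using Yv_inner[of u nn u f] eq u V by auto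
    also have "\<dots> = u \<bullet> (cov_mat f nn *\<^sub>v v)" using Yv_inner[of u nn v f] u v V by auto
    finally show False using orth u v ne nz by auto
  qed
  have "pairwise orthogonal Z" unfolding pairwise_def Z_def orthogonal_def
  proof (intro ballI impI)
    fix a b assume "a \<in> Yv f nn ` V" "b \<in> Yv f nn ` V" "a \<noteq> b"
    then obtain u v where "u \<in> V" "v \<in> V" "a = Yv f nn u" "b = Yv f nn v" "u \<noteq> v" by auto
    thus "a \<bullet> b = 0" using Yv_inner[of u nn v f] orth V by auto
  qed
  moreover have "0 \<notin> Z" unfolding Z_def
  proof
    assume "0 \<in> Yv f nn ` V"
    then obtain u where "u \<in> V" "Yv f nn u = 0" by auto
    thus False using Yv_inner[of u nn u f] nz V by auto
  qed
  ultimately have ind: "independent Z" by (rule pairwise_orthogonal_independent)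
  have ZS: "Z \<subseteq> S" unfolding Z_def using Yv_in_S by auto
  obtain B where B: "B \<subseteq> S" "independent B" "S \<subseteq> span B" "card B = dim S"
    by (rule real_vector.basis_exists)
  have fB: "finite B" using independent_span_bound[of "f ` {..<nn}" B] B S_sub by auto
  have "card Z \<le> card B" using independent_span_bound[OF fB ind] ZS B by auto
  hence "card Z \<le> rf x p K" unfolding rf_def using B by simp
  thus ?thesis unfolding Z_def using card_image[OF inj] by simp
qed

end




lemma Yb_smult: assumes "\<And>j. j < r k \<Longrightarrow> offs r k + j < dim_vec \<eta>"
  shows "Yb r f k (c \<cdot>\<^sub>v \<eta>) = c *\<^sub>R Yb r f k \<eta>"
  unfolding Yb_def scaleR_sum_right by (rule sum.cong[OF refl]) (use assms in auto)

lemma dmat_transpose: "transpose_mat (dmat m d) = dmat m d"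
  unfolding dmat_def by (rule eq_matI) auto

lemma dmat_carrier: "dmat m d \<in> carrier_mat m m" unfolding dmat_def by auto

lemma dmat_left_entry: assumes M: "M \<in> carrier_mat m nc" and a: "a < m" and c: "c < nc"
  shows "(dmat m d * M) $$ (a,c) = d a * M $$ (a,c)"
proof -
  have "(dmat m d * M) $$ (a,c) = (\<Sum>k\<in>{0..<m}. (if a = k then d a else 0) * M $$ (k,c))"
    using M a c by (auto simp: dmat_def scalar_prod_def intro!: sum.cong)
  also have "\<dots> = (\<Sum>k\<in>{0..<m}. if k = a then d a * M $$ (a,c) else 0)" by (rule sum.cong) auto
  finally show ?thesis using a by simp
qed

lemma dmat_right_entry: assumes M: "M \<in> carrier_mat nr m" and a: "a < nr" and b: "b < m"
  shows "(M * dmat m d) $$ (a,b) = M $$ (a,b) * d b"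
proof -
  have "(M * dmat m d) $$ (a,b) = (\<Sum>k\<in>{0..<m}. M $$ (a,k) * (if k = b then d b else 0))"
    using M a b by (auto simp: dmat_def scalar_prod_def intro!: sum.cong)
  also have "\<dots> = (\<Sum>k\<in>{0..<m}. if k = b then M $$ (a,b) * d b else 0)" by (rule sum.cong) auto
  finally show ?thesis using b by simp
qed

lemma dmat_conj_entry: assumes M: "M \<in> carrier_mat m m" and a: "a < m" and b: "b < m"
  shows "(dmat m d * M * transpose_mat (dmat m d)) $$ (a,b) = d a * M $$ (a,b) * d b"
proof -
  have DM: "dmat m d * M \<in> carrier_mat m m" by (rule mult_carrier_mat[OF dmat_carrier M])
  have "(dmat m d * M * transpose_mat (dmat m d)) $$ (a,b) = (dmat m d * M * dmat m d) $$ (a,b)"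
    by (simp only: dmat_transpose)
  also have "\<dots> = (dmat m d * M) $$ (a,b) * d b" by (rule dmat_right_entry[OF DM a b])
  also have "\<dots> = d a * M $$ (a,b) * d b" using dmat_left_entry[OF M a b] by simp
  finally show ?thesis .
qed



theorem theorem4:
  fixes x :: "nat \<Rightarrow> nat \<Rightarrow> 'v::real_inner" and p :: "nat \<Rightarrow> nat" and K :: nat
    and f1 f2 :: "nat \<Rightarrow> 'v" and eta1 eta2 :: "nat \<Rightarrow> real vec"
  assumes "K \<ge> 2"
    and "\<forall>k<K. rk x p k \<ge> 1"
    and "dgcca_choice x p K f1 eta1"
    and "dgcca_choice x p K f2 eta2"
    and "dg_L x p K f1 \<ge> 1"
    and "\<forall>l\<in>{1..dg_L x p K f1}. \<forall>l'\<in>{1..dg_L x p K f1}.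
           l \<noteq> l' \<longrightarrow> dg_lambda x p K f1 l \<noteq> dg_lambda x p K f1 l'"
  shows "\<forall>k<K. \<forall>i<p k. dg_common x p K f1 eta1 k i = dg_common x p K f2 eta2 k i"
proof -
  define r where "r = rk x p"
  define n where "n = offs r K"
  have ndg: "dg_n x p K = n" unfolding dg_n_def n_def r_def ..
  have ok1: "\<And>k. k < K \<Longrightarrow> blkok x p f1 k" using choice_blkok[OF assms(3)] .
  have ok2: "\<And>k. k < K \<Longrightarrow> blkok x p f2 k" using choice_blkok[OF assms(4)] .
  define TT where "TT = Tm r K f2 f1"
  have Tc: "TT \<in> carrier_mat n n" using T_carrier[OF ok1 ok2 r_def n_def] unfolding TT_def .
  have TtT: "transpose_mat TT * TT = 1\<^sub>m n" using TtT_one[OF ok1 ok2 r_def n_def] unfolding TT_def .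
  have TTt: "TT * transpose_mat TT = 1\<^sub>m n" using TTt_one[OF ok1 ok2 r_def n_def] unfolding TT_def .
  define G1 where "G1 = cov_mat f1 n"
  define G2 where "G2 = cov_mat f2 n"
  have Gs: "G2 = TT * G1 * transpose_mat TT" using G_sim[OF ok1 ok2 r_def n_def] unfolding TT_def G1_def G2_def .
  have G1c: "G1 \<in> carrier_mat n n" unfolding G1_def by (rule cov_carrier)
  have G2c: "G2 \<in> carrier_mat n n" unfolding G2_def by (rule cov_carrier)
  have Ttc: "transpose_mat TT \<in> carrier_mat n n" using Tc by auto
  have "similar_mat G2 G1" unfolding similar_mat_def
    by (rule exI[of _ TT], rule exI[of _ "transpose_mat TT"], unfold similar_mat_wit_def Let_def,
        insert G1c G2c Tc Ttc TtT TTt Gs, auto)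
  hence cp: "char_poly G2 = char_poly G1" by (rule char_poly_similar)
  define lam where "lam = eigval G2"
  have lam1: "eigval G1 = lam" unfolding lam_def by (rule ext) (simp add: eigval_def cp)
  have lamd1: "dg_lambda x p K f1 = lam" unfolding dg_lambda_def[abs_def] ndg G1_def[symmetric] lam1 ..
  have lamd2: "dg_lambda x p K f2 = lam" unfolding dg_lambda_def[abs_def] ndg G2_def[symmetric] lam_def ..
  have LEq: "dg_L x p K f2 = dg_L x p K f1" unfolding dg_L_def lamd1 lamd2 ..
  define L where "L = dg_L x p K f1"
  define R where "R = rf x p K"
  define Lset where "Lset = {l\<in>{1..R}. 1 < lam l}"
  have L1: "1 \<le> L" using assms(5) unfolding L_def .
  have Ldef: "L = (if Lset = {} then 0 else Max Lset)" unfolding L_def dg_L_def lamd1 Lset_def R_def ..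
  have Lne: "Lset \<noteq> {}" using L1 Ldef by (auto split: if_splits)
  have LM: "L = Max Lset" using Lne Ldef by auto
  have fL: "finite Lset" unfolding Lset_def by auto
  have LinS: "L \<in> Lset" unfolding LM using Max_in[OF fL Lne] .
  have L2: "L \<le> R" and L3: "lam L > 1" using LinS unfolding Lset_def by auto
  have L4: "\<And>l. l \<in> {1..R} \<Longrightarrow> lam l > 1 \<Longrightarrow> l \<le> L"
    unfolding LM using fL by (auto intro: Max_ge simp: Lset_def)
  have dist: "\<And>l l'. l \<in> {1..L} \<Longrightarrow> l' \<in> {1..L} \<Longrightarrow> l \<noteq> l' \<Longrightarrow> lam l \<noteq> lam l'"
    using assms(6) unfolding L_def[symmetric] lamd1 by blast
  have ch1: "\<And>l. l \<in> {1..R} \<Longrightarrow> eta1 l \<in> carrier_vec n \<and> G1 *\<^sub>v eta1 l = lam l \<cdot>\<^sub>v eta1 l"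
    and ch1o: "\<And>l l'. l \<in> {1..R} \<Longrightarrow> l' \<in> {1..R} \<Longrightarrow> eta1 l \<bullet> eta1 l' = (if l = l' then 1 else 0)"
    using assms(3) unfolding dgcca_choice_def Let_def R_def[symmetric] r_def[symmetric] n_def[symmetric]
      G1_def[symmetric] lam1 by auto
  have ch2: "\<And>l. l \<in> {1..R} \<Longrightarrow> eta2 l \<in> carrier_vec n \<and> G2 *\<^sub>v eta2 l = lam l \<cdot>\<^sub>v eta2 l"
    and ch2o: "\<And>l l'. l \<in> {1..R} \<Longrightarrow> l' \<in> {1..R} \<Longrightarrow> eta2 l \<bullet> eta2 l' = (if l = l' then 1 else 0)"
    using assms(4) unfolding dgcca_choice_def Let_def R_def[symmetric] r_def[symmetric] n_def[symmetric]
      G2_def[symmetric] lam_def by auto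
  have rfn: "R \<le> n" using rf_le_n[OF ok2] unfolding R_def n_def r_def .
  have H: "\<And>V. finite V \<Longrightarrow> V \<subseteq> carrier_vec n \<Longrightarrow> (\<forall>u\<in>V. \<forall>v\<in>V. u \<noteq> v \<longrightarrow> u \<bullet> (G2 *\<^sub>v v) = 0)
              \<Longrightarrow> (\<forall>u\<in>V. u \<bullet> (G2 *\<^sub>v u) \<noteq> 0) \<Longrightarrow> card V \<le> R"
    using H_bound[OF ok2] unfolding R_def n_def r_def G2_def by blast
  have key: "\<forall>l\<in>{1..L}. \<exists>c. eta2 l = c \<cdot>\<^sub>v (TT *\<^sub>v eta1 l) \<and> c * c = 1"
  proof
    fix l assume l: "l \<in> {1..L}"
    have lR: "l \<in> {1..R}" using l L2 by auto
    have e1: "eta1 l \<in> carrier_vec n" "G1 *\<^sub>v eta1 l = lam l \<cdot>\<^sub>v eta1 l" "eta1 l \<bullet> eta1 l = 1"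
      using ch1[OF lR] ch1o[OF lR lR] by auto
    define u where "u = TT *\<^sub>v eta1 l"
    have uc: "u \<in> carrier_vec n" unfolding u_def using Tc e1 by auto
    have TTu: "transpose_mat TT *\<^sub>v u = eta1 l" unfolding u_def
      using assoc_mult_mat_vec[OF Ttc Tc e1(1), symmetric] TtT e1 by simp
    have Gu: "G2 *\<^sub>v u = lam l \<cdot>\<^sub>v u"
    proof -
      have "G2 *\<^sub>v u = TT *\<^sub>v (G1 *\<^sub>v (transpose_mat TT *\<^sub>v u))" unfolding Gs
        using Tc G1c Ttc uc by (simp add: assoc_mult_mat_vec[of _ n n _ n])
      also have "\<dots> = lam l \<cdot>\<^sub>v u" unfolding TTu e1(2) unfolding u_def using Tc e1 by (simp add: mult_mat_vec)
      finally show ?thesis .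
    qed
    have uu: "u \<bullet> u = 1"
      using transpose_vec_mult_scalar[OF Tc e1(1) uc] TTu e1(3) unfolding u_def[symmetric] by simp
    have u0: "u \<noteq> 0\<^sub>v n" using uu by auto
    obtain c where c: "eta2 l = c \<cdot>\<^sub>v u"
      using eig_unique[OF G2c _ _ lam_def ch2 ch2o rfn L1 L2 L3 L4 dist H l uc Gu u0]
        cov_sym cov_symf unfolding G2_def by blast
    have "1 = eta2 l \<bullet> eta2 l" using ch2o[OF lR lR] by simp
    also have "\<dots> = c * c * (u \<bullet> u)" unfolding c using uc by simp
    finally have "c * c = 1" using uu by simp
    thus "\<exists>c. eta2 l = c \<cdot>\<^sub>v (TT *\<^sub>v eta1 l) \<and> c * c = 1" using c unfolding u_def by blast
  qed
  then obtain s where s: "\<And>l. l \<in> {1..L} \<Longrightarrow> eta2 l = s l \<cdot>\<^sub>v (TT *\<^sub>v eta1 l) \<and> s l * s l = 1"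
    by metis
  have s1: "\<And>l. l \<in> {1..L} \<Longrightarrow> s l * s l = 1" using s by blast
  have abs1: "\<And>l. l \<in> {1..L} \<Longrightarrow> \<bar>s l\<bar> = 1"
    using s1 by (simp add: abs_square_eq_1[symmetric] power2_eq_square)
  have e1c: "\<And>l. l \<in> {1..L} \<Longrightarrow> eta1 l \<in> carrier_vec n" using ch1 L2 by auto
  have Ybs: "Yb r f2 k (eta2 l) = s l *\<^sub>R Yb r f1 k (eta1 l)" if l: "l \<in> {1..L}" and k: "k < K" for l k
  proof -
    have "Yb r f2 k (eta2 l) = Yb r f2 k (s l \<cdot>\<^sub>v (TT *\<^sub>v eta1 l))" using s[OF l] by simp
    also have "\<dots> = s l *\<^sub>R Yb r f2 k (TT *\<^sub>v eta1 l)"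
      by (rule Yb_smult) (use offs_bound[of k K _ r] k Tc n_def in auto)
    also have "Yb r f2 k (TT *\<^sub>v eta1 l) = Yb r f1 k (eta1 l)"
      unfolding TT_def by (rule Yb_T[OF ok1 ok2 r_def n_def k e1c[OF l]])
    finally show ?thesis .
  qed
  have zs: "dg_z x p f2 eta2 k l = s l *\<^sub>R dg_z x p f1 eta1 k l" if l: "l \<in> {1..L}" and k: "k < K" for l k
  proof -
    have s0: "s l \<noteq> 0" using s1[OF l] by auto
    show ?thesis
      unfolding z_Yb[OF ok2[OF k]] z_Yb[OF ok1[OF k]] r_def[symmetric] Ybs[OF l k]
      using s0 abs1[OF l] by auto
  qed
  have ws: "dg_w x p K f2 eta2 l = s l *\<^sub>R dg_w x p K f1 eta1 l" if l: "l \<in> {1..L}" for l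
    unfolding w_Yv lamd1 lamd2 ndg n_def Yv_blocks using Ybs[OF l]
    by (simp add: scaleR_sum_right)
  have Asets: "dg_Aset x p K f2 eta2 l = dg_Aset x p K f1 eta1 l" if l: "l \<in> {1..L}" for l
  proof -
    have eq: "inner (dg_z x p f2 eta2 j l - a *\<^sub>R dg_w x p K f2 eta2 l) (dg_z x p f2 eta2 k l - a *\<^sub>R dg_w x p K f2 eta2 l)
      = inner (dg_z x p f1 eta1 j l - a *\<^sub>R dg_w x p K f1 eta1 l) (dg_z x p f1 eta1 k l - a *\<^sub>R dg_w x p K f1 eta1 l)"
      if j: "j < K" and k: "k < K" for j k a
    proof -
      have "dg_z x p f2 eta2 j l - a *\<^sub>R dg_w x p K f2 eta2 l = s l *\<^sub>R (dg_z x p f1 eta1 j l - a *\<^sub>R dg_w x p K f1 eta1 l)"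
        unfolding zs[OF l j] ws[OF l] by (simp add: algebra_simps)
      moreover have "dg_z x p f2 eta2 k l - a *\<^sub>R dg_w x p K f2 eta2 l = s l *\<^sub>R (dg_z x p f1 eta1 k l - a *\<^sub>R dg_w x p K f1 eta1 l)"
        unfolding zs[OF l k] ws[OF l] by (simp add: algebra_simps)
      ultimately show ?thesis using s1[OF l] by (simp add: mult.assoc[symmetric])
    qed
    show ?thesis unfolding dg_Aset_def
    proof (rule Collect_cong)
      fix a
      let ?P2 = "\<lambda>j k. inner (dg_z x p f2 eta2 j l - a *\<^sub>R dg_w x p K f2 eta2 l) (dg_z x p f2 eta2 k l - a *\<^sub>R dg_w x p K f2 eta2 l)"
      let ?P1 = "\<lambda>j k. inner (dg_z x p f1 eta1 j l - a *\<^sub>R dg_w x p K f1 eta1 l) (dg_z x p f1 eta1 k l - a *\<^sub>R dg_w x p K f1 eta1 l)"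
      show "(\<exists>j<K. \<exists>k<K. j \<noteq> k \<and> ?P2 j k = 0) = (\<exists>j<K. \<exists>k<K. j \<noteq> k \<and> ?P1 j k = 0)"
      proof
        assume "\<exists>j<K. \<exists>k<K. j \<noteq> k \<and> ?P2 j k = 0"
        then obtain j k where h: "j < K" "k < K" "j \<noteq> k" "?P2 j k = 0" by blast
        have "?P1 j k = 0" using h(4) unfolding eq[OF h(1) h(2)] .
        thus "\<exists>j<K. \<exists>k<K. j \<noteq> k \<and> ?P1 j k = 0" using h(1-3) by blast
      next
        assume "\<exists>j<K. \<exists>k<K. j \<noteq> k \<and> ?P1 j k = 0"
        then obtain j k where h: "j < K" "k < K" "j \<noteq> k" "?P1 j k = 0" by blast
        have "?P2 j k = 0" using h(4) unfolding eq[OF h(1) h(2)] .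
        thus "\<exists>j<K. \<exists>k<K. j \<noteq> k \<and> ?P2 j k = 0" using h(1-3) by blast
      qed
    qed
  qed
  have alph: "dg_alpha x p K f2 eta2 l = dg_alpha x p K f1 eta1 l" if l: "l \<in> {1..L}" for l
    unfolding dg_alpha_def Asets[OF l] ..
  have cs: "dg_c x p K f2 eta2 l = s l *\<^sub>R dg_c x p K f1 eta1 l" if l: "l \<in> {1..L}" for l
    unfolding dg_c_def alph[OF l] ws[OF l] by simp
  have I0: "dg_I0 x p K f2 eta2 = dg_I0 x p K f1 eta1"
    unfolding dg_I0_def LEq L_def[symmetric] using alph by auto
  have I0l: "dg_I0list x p K f2 eta2 = dg_I0list x p K f1 eta1" unfolding dg_I0list_def I0 ..
  define li where "li = dg_I0list x p K f1 eta1"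
  define m where "m = length li"
  have li_in: "li ! a \<in> {1..L}" if "a < m" for a
  proof -
    have "li ! a \<in> set li" using that unfolding m_def by auto
    also have "set li = dg_I0 x p K f1 eta1" unfolding li_def dg_I0list_def
      by (rule set_sorted_list_of_set) (simp add: dg_I0_def)
    finally show ?thesis unfolding dg_I0_def L_def by auto
  qed
  show ?thesis
  proof (intro allI impI)
    fix k i assume k: "k < K" and i: "i < p k"
    show "dg_common x p K f1 eta1 k i = dg_common x p K f2 eta2 k i"
    proof (cases "dg_I0 x p K f1 eta1 = {}")
      case True thus ?thesis unfolding dg_common_def I0 by simp
    next
      case False
      define d where "d = (\<lambda>a. s (li ! a))"
      have dd: "d a * d a = 1" if "a < m" for a unfolding d_def using s1[OF li_in[OF that]] .
      define SS where "SS = dmat m d"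
      define C1 where "C1 = dg_covz x p K f1 eta1 k"
      define C2 where "C2 = dg_covz x p K f2 eta2 k"
      have C1c: "C1 \<in> carrier_mat m m" unfolding C1_def dg_covz_def li_def[symmetric] m_def by auto
      have C1s: "transpose_mat C1 = C1" unfolding C1_def dg_covz_def
        by (rule eq_matI) (auto simp: inner_commute)
      have C2e: "C2 = SS * C1 * transpose_mat SS"
      proof (rule eq_matI)
        fix a b assume "a < dim_row (SS * C1 * transpose_mat SS)" "b < dim_col (SS * C1 * transpose_mat SS)"
        hence a: "a < m" and b: "b < m" unfolding SS_def using dmat_carrier[of m d] C1c by auto
        have "(SS * C1 * transpose_mat SS) $$ (a,b) = d a * C1 $$ (a,b) * d b"
          unfolding SS_def by (rule dmat_conj_entry[OF C1c a b])
        also have "\<dots> = C2 $$ (a,b)" unfolding C1_def C2_def dg_covz_def I0l li_def[symmetric] m_def[symmetric]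
          using a b zs[OF li_in[OF a] k] zs[OF li_in[OF b] k] by (simp add: d_def)
        finally show "C2 $$ (a,b) = (SS * C1 * transpose_mat SS) $$ (a,b)" by simp
      qed (use C1c dmat_carrier[of m d] in \<open>auto simp: SS_def C2_def dg_covz_def I0l li_def[symmetric] m_def\<close>)
      have StS: "transpose_mat SS * SS = 1\<^sub>m m" unfolding SS_def dmat_transpose dmat_mult
        by (rule eq_matI) (auto simp: dmat_def dd)
      have P: "pinv C2 = SS * pinv C1 * transpose_mat SS" unfolding C2e SS_def
        by (rule pinv_conj[OF C1c C1s dmat_carrier StS[unfolded SS_def]])
      have P1c: "pinv C1 \<in> carrier_mat m m" using penrose_pinv[OF C1c C1s] C1c unfolding penrose_def by auto
      have Pe: "pinv C2 $$ (a,b) = d a * pinv C1 $$ (a,b) * d b" if "a < m" "b < m" for a b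
        unfolding P SS_def by (rule dmat_conj_entry[OF P1c that])
      have "dg_common x p K f2 eta2 k i = (\<Sum>a<m. \<Sum>b<m.
          (inner (x k i) (dg_z x p f2 eta2 k (li ! a)) * pinv C2 $$ (a, b)) *\<^sub>R dg_c x p K f2 eta2 (li ! b))"
        unfolding dg_common_def I0 I0l li_def[symmetric] m_def[symmetric] C2_def using False by simp
      also have "\<dots> = (\<Sum>a<m. \<Sum>b<m.
          (inner (x k i) (dg_z x p f1 eta1 k (li ! a)) * pinv C1 $$ (a, b)) *\<^sub>R dg_c x p K f1 eta1 (li ! b))"
      proof (intro sum.cong refl)
        fix a b assume a: "a \<in> {..<m}" and b: "b \<in> {..<m}"
        hence a': "a < m" and b': "b < m" by auto
        have "(inner (x k i) (dg_z x p f2 eta2 k (li ! a)) * pinv C2 $$ (a, b)) *\<^sub>R dg_c x p K f2 eta2 (li ! b)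
          = ((d a * d a) * (d b * d b) * (inner (x k i) (dg_z x p f1 eta1 k (li ! a)) * pinv C1 $$ (a, b)))
              *\<^sub>R dg_c x p K f1 eta1 (li ! b)"
          unfolding zs[OF li_in[OF a'] k] cs[OF li_in[OF b']] Pe[OF a' b'] d_def
          by (simp add: mult_ac)
        also have "\<dots> = (inner (x k i) (dg_z x p f1 eta1 k (li ! a)) * pinv C1 $$ (a, b)) *\<^sub>R dg_c x p K f1 eta1 (li ! b)"
          using dd[OF a'] dd[OF b'] by simp
        finally show "(inner (x k i) (dg_z x p f2 eta2 k (li ! a)) * pinv C2 $$ (a, b)) *\<^sub>R dg_c x p K f2 eta2 (li ! b)
          = (inner (x k i) (dg_z x p f1 eta1 k (li ! a)) * pinv C1 $$ (a, b)) *\<^sub>R dg_c x p K f1 eta1 (li ! b)" .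
      qed
      also have "\<dots> = dg_common x p K f1 eta1 k i"
        unfolding dg_common_def li_def[symmetric] m_def[symmetric] C1_def using False by simp
      finally show ?thesis by simp
    qed
  qed
qed


end
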